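(* Fix an integer $N\ge 1$. For real $\mu$, let $\ell^2_\mu\subset\mathbb{C}^\infty$ be the space of sequences with norm $\|\mathbf u\|_{\ell^2_\mu}=\bigl(\sum_{k\ge0}|u_k|^2(k+1)^{2\mu}\bigr)^{1/2}$. Let $\mathcal L$, $\mathcal B$, $D$ and the operators $\mathcal S_\lambda$ be as in the context. Let $\mathbf c\in\mathbb{C}^N$, and let $\mathbf f\in\ell^2_{\lambda-N+1}$ for some $\lambda\in\{D-1,D,D+1,\dots\}$ (the Chebyshev coefficients of the right-hand side). Suppose that $\begin{pmatrix}\mathcal B\\ \mathcal L\end{pmatrix}:\ell^2_{\lambda+1}\to\ell^2_\lambda$ is invertible, and let $\mathbf u\in\ell^2_{\lambda+1}$ be the solution of $\begin{pmatrix}\mathcal B\\ \mathcal L\end{pmatrix}\mathbf u=\begin{pmatrix}\mathbf c\\ \mathcal S_{N-1}\cdots\mathcal S_0\mathbf f\end{pmatrix}$. Let $\mathcal P_n=(I_n,\mathbf 0)$ be the $n\times\infty$ projection onto the first $n$ entries, $A_n=\mathcal P_n\begin{pmatrix}\mathcal B\\ \mathcal L\end{pmatrix}\mathcal P_n^\top$, and define $$\mathbf u_n=A_n^{-1}\mathcal P_n\begin{pmatrix}\mathbf c\\ \mathcal S_{N-1}\cdots\mathcal S_0\mathbf f\end{pmatrix}.$$ Then there is a constant $C$, independent of $n$, such that (for all sufficiently large $n$) $$\|\mathbf u-\mathcal P_n^\top\mathbf u_n\|_{\ell^2_{\lambda+1}}\le C\,\|\mathbf u-\mathcal P_n^\top\mathcal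 P_n\mathbf u\|_{\ell^2_{\lambda+1}}\longrightarrow0\quad(n\to\infty).$$
   Context: Chebyshev polynomials are $T_k(x)=\cos(k\arccos x)$. For integers $\lambda\ge1$, $C^{(\lambda)}_k$ are the ultraspherical polynomials, orthogonal on $[-1,1]$ with weight $(1-x^2)^{\lambda-1/2}$ and normalized so that $C^{(\lambda)}_k(x)=\frac{2^k(\lambda)_k}{k!}x^k+O(x^{k-1})$, $(\lambda)_k=\frac{(\lambda+k-1)!}{(\lambda-1)!}$. Operators act on coefficient sequences indexed from $0$. $(\mathcal D_\lambda\mathbf u)_j=2^{\lambda-1}(\lambda-1)!\,(j+\lambda)u_{j+\lambda}$ (maps Chebyshev coefficients of $u$ to $C^{(\lambda)}$ coefficients of $u^{(\lambda)}$). $(\mathcal S_0\mathbf u)_0=u_0-\tfrac12u_2$, $(\mathcal S_0\mathbf u)_j=\tfrac12(u_j-u_{j+2})$ for $j\ge1$ (Chebyshev to $C^{(1)}$ coefficients); for $\lambda\ge1$, $(\mathcal S_\lambda\mathbf v)_j=\frac{\lambda}{\lambda+j}v_j-\frac{\lambda}{\lambda+j+2}v_{j+2}$ ($C^{(\lambda)}$ to $C^{(\lambda+1)}$ coefficients). $\mathcal M_0[a]$ maps Chebyshev coefficients of $v$ to Chebyshev coefficients of $av$, and for $\lambda\ge1$, $\mathcal M_\lambda[a]$ maps $C^{(\lambda)}$ coefficients of $v$ to $C^{(\lambda)}$ coefficients of $av$. The $N$th order differential operator $u\mapsto u^{(N)}+\sum_{\lambda=0}^{N-1}a^\lambda u^{(\lambda)}$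 on $[-1,1]$ (leading coefficient $1$) is represented on Chebyshev coefficients by $\mathcal L=\mathcal D_N+\sum_{\lambda=1}^{N-1}\mathcal S_{N-1}\cdots\mathcal S_\lambda\mathcal M_\lambda[a^\lambda]\mathcal D_\lambda+\mathcal S_{N-1}\cdots\mathcal S_0\mathcal M_0[a^0]$, where the coefficient functions $a^0,\dots,a^{N-1}$ are sufficiently smooth that each $\mathcal M_\lambda[a^\lambda]$ is bounded on every $\ell^2_\mu$. $\mathcal B$ is a linear operator from sequences to $\mathbb{C}^N$ representing exactly $N$ boundary conditions on the Chebyshev coefficients (e.g. Dirichlet: rows $(T_k(-1))_k$ and $(T_k(1))_k$), and $D$ is an integer such that $\mathcal B:\ell^2_D\to\mathbb{C}^N$ is bounded. $\begin{pmatrix}\mathcal B\\ \mathcal L\end{pmatrix}$ outputs the $N$ entries of $\mathcal B\mathbf u$ followed by $\mathcal L\mathbf u$. *)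

theory Defs
  imports "HOL-Analysis.Analysis"
begin

type_synonym seq = "nat \<Rightarrow> complex"

definition l2 :: "real \<Rightarrow> seq set" where
  "l2 mu = {u. summable (\<lambda>k. (cmod (u k))\<^sup>2 * (real k + 1) powr (2 * mu))}"

definition l2norm :: "real \<Rightarrow> seq \<Rightarrow> real" where
  "l2norm mu u = sqrt (\<Sum>k. (cmod (u k))\<^sup>2 * (real k + 1) powr (2 * mu))"

text \<open>Chebyshev polynomials T_k(x) = cos(k arccos x) and ultraspherical polynomials C^(l)_k
  (three-term recurrence, giving leading coefficient 2^k (l)_k / k!).\<close>
definition cheb :: "nat \<Rightarrow> real \<Rightarrow> real" where
  "cheb k x = cos (real k * arccos x)"

fun gegen :: "nat \<Rightarrow> nat \<Rightarrow> real \<Rightarrow> real" where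
  "gegen l 0 x = 1"
| "gegen l (Suc 0) x = 2 * real l * x"
| "gegen l (Suc (Suc k)) x =
     (2 * x * (real k + 1 + real l) * gegen l (Suc k) x - (real k + 2 * real l) * gegen l k x) / (real k + 2)"

definition basis :: "nat \<Rightarrow> nat \<Rightarrow> real \<Rightarrow> real" where
  "basis l k x = (if l = 0 then cheb k x else gegen l k x)"

definition wt :: "nat \<Rightarrow> real \<Rightarrow> real" where
  "wt l x = (1 - x\<^sup>2) powr (real l - 1/2)"

text \<open>Matrix of the multiplication operator M_l[a]: entry (j,k) is the j-th level-l
  coefficient of a * basis_k.\<close>
definition Mmat :: "nat \<Rightarrow> (real \<Rightarrow> complex) \<Rightarrow> nat \<Rightarrow> nat \<Rightarrow> complex" where
  "Mmat l a j k =
     integral {-1..1} (\<lambda>x. a x * complex_of_real (basis l k x * basis l j x * wt l x))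
     / complex_of_real (integral {-1..1} (\<lambda>x. (basis l j x)\<^sup>2 * wt l x))"

definition Mop :: "nat \<Rightarrow> (real \<Rightarrow> complex) \<Rightarrow> seq \<Rightarrow> seq" where
  "Mop l a v j = (\<Sum>k. Mmat l a j k * v k)"

definition Dop :: "nat \<Rightarrow> seq \<Rightarrow> seq" where
  "Dop l u j = of_real (2 ^ (l - 1) * fact (l - 1) * real (j + l)) * u (j + l)"

definition Sop :: "nat \<Rightarrow> seq \<Rightarrow> seq" where
  "Sop l v j =
     (if l = 0 then (if j = 0 then v 0 - v 2 / 2 else (v j - v (j + 2)) / 2)
      else of_real (real l / (real l + real j)) * v j
           - of_real (real l / (real l + real j + 2)) * v (j + 2))"

text \<open>Schain lo hi v = S_(hi-1) ( ... (S_lo v)); the identity if hi <= lo.\<close>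
primrec Schain :: "nat \<Rightarrow> nat \<Rightarrow> seq \<Rightarrow> seq" where
  "Schain lo 0 v = v"
| "Schain lo (Suc h) v = (if h < lo then v else Sop h (Schain lo h v))"

text \<open>The operator L for u^(N) + sum_{l<N} a_l u^(l).\<close>
definition Lop :: "nat \<Rightarrow> (nat \<Rightarrow> real \<Rightarrow> complex) \<Rightarrow> seq \<Rightarrow> seq" where
  "Lop N a u j =
     Dop N u j
     + (\<Sum>l\<in>{1..<N}. Schain l N (Mop l (a l) (Dop l u)) j)
     + Schain 0 N (Mop 0 (a 0) u) j"

definition Bapp :: "(nat \<Rightarrow> nat \<Rightarrow> complex) \<Rightarrow> seq \<Rightarrow> nat \<Rightarrow> complex" where
  "Bapp b u i = (\<Sum>k. b i k * u k)"

definition BL :: "nat \<Rightarrow> (nat \<Rightarrow> nat \<Rightarrow> complex) \<Rightarrow> (nat \<Rightarrow> real \<Rightarrow> complex) \<Rightarrow> seq \<Rightarrow> seq" where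
  "BL N b a u k = (if k < N then Bapp b u k else Lop N a u (k - N))"

definition trunc :: "nat \<Rightarrow> seq \<Rightarrow> seq" where
  "trunc n u k = (if k < n then u k else 0)"

end

theory Submission
  imports Defs "HOL-Library.Diagonal_Subsequence"
begin


definition W :: "real \<Rightarrow> nat \<Rightarrow> real" where "W mu k = (real k + 1) powr (2*mu)"
definition sq :: "real \<Rightarrow> seq \<Rightarrow> real" where "sq mu u = (\<Sum>k. (cmod (u k))\<^sup>2 * W mu k)"

lemma l2_iff: "u \<in> l2 mu \<longleftrightarrow> summable (\<lambda>k. (cmod (u k))\<^sup>2 * W mu k)"
  by (simp add: l2_def W_def)
lemma l2norm_sq: "l2norm mu u = sqrt (sq mu u)"
  by (simp add: l2norm_def sq_def W_def)
lemma W_pos: "W mu k > 0" by (simp add: W_def)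
lemma W_suc: "W (mu+1) k = (real k + 1)\<^sup>2 * W mu k"
proof -
  have "W (mu+1) k = (real k + 1) powr (2*mu + 2)" by (simp add: W_def algebra_simps)
  also have "\<dots> = (real k + 1) powr (2*mu) * (real k + 1) powr 2" by (simp add: powr_add)
  also have "(real k + 1) powr 2 = (real k + 1)\<^sup>2" by (simp add: powr_realpow)
  finally show ?thesis by (simp add: W_def)
qed
lemma W_mono: "mu \<le> nu \<Longrightarrow> W mu k \<le> W nu k"
  unfolding W_def by (rule powr_mono) auto

lemma term_nn: "0 \<le> (cmod (g j))\<^sup>2 * W nu j" by (simp add: W_pos less_imp_le)

lemma sq_nn: "u \<in> l2 mu \<Longrightarrow> 0 \<le> sq mu u"
  unfolding sq_def l2_iff by (intro suminf_nonneg) (auto simp: term_nn)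

lemma dom:
  assumes f: "f \<in> l2 mu" and C: "C \<ge> 0"
    and le: "\<And>j. (cmod (g j))\<^sup>2 * W nu j \<le> C * ((cmod (f (j+s)))\<^sup>2 * W mu (j+s))"
  shows "g \<in> l2 nu \<and> sq nu g \<le> C * sq mu f"
proof -
  let ?F = "\<lambda>k. (cmod (f k))\<^sup>2 * W mu k"
  have sF: "summable ?F" using f by (simp add: l2_iff)
  have sFs: "summable (\<lambda>j. ?F (j+s))" using sF summable_iff_shift[of ?F s] by blast
  have sg: "summable (\<lambda>j. (cmod (g j))\<^sup>2 * W nu j)"
    by (rule summable_comparison_test'[of "\<lambda>j. C * ?F (j+s)" 0]) (use le sFs in \<open>auto intro: summable_mult simp: term_nn\<close>)
  have "sq nu g \<le> (\<Sum>j. C * ?F (j+s))" unfolding sq_def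
    by (rule suminf_le[OF le sg]) (intro summable_mult sFs)
  also have "\<dots> = C * (\<Sum>j. ?F (j+s))" using suminf_mult[OF sFs, of C] by simp
  also have "(\<Sum>j. ?F (j+s)) \<le> sq mu f"
  proof -
    have "sq mu f = (\<Sum>j. ?F (j+s)) + sum ?F {..<s}" unfolding sq_def by (rule suminf_split_initial_segment[OF sF])
    moreover have "0 \<le> sum ?F {..<s}" by (intro sum_nonneg) (simp add: term_nn)
    ultimately show ?thesis by linarith
  qed
  hence "C * (\<Sum>j. ?F (j+s)) \<le> C * sq mu f" using C by (rule mult_left_mono)
  finally show ?thesis using sg by (simp add: l2_iff)
qed

lemma dom0:
  assumes f: "f \<in> l2 mu" and C: "C \<ge> 0"
    and le: "\<And>j. (cmod (g j))\<^sup>2 * W nu j \<le> C * ((cmod (f j))\<^sup>2 * W mu j)"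
  shows "g \<in> l2 nu \<and> sq nu g \<le> C * sq mu f"
  using dom[OF f C, of g nu 0] le by simp

lemma l2_mono: "u \<in> l2 nu \<Longrightarrow> mu \<le> nu \<Longrightarrow> u \<in> l2 mu \<and> sq mu u \<le> sq nu u"
  using dom0[of u nu 1 u mu] by (simp add: W_mono mult_left_mono)

lemma sq2: "(x + y)\<^sup>2 \<le> 2 * x\<^sup>2 + 2 * (y::real)\<^sup>2"
proof -
  have "0 \<le> (x - y)\<^sup>2" by simp
  thus ?thesis by (simp add: power2_eq_square algebra_simps)
qed

lemma add_l2:
  assumes f: "f \<in> l2 mu" and g: "g \<in> l2 mu"
  shows "(\<lambda>k. f k + g k) \<in> l2 mu \<and> sq mu (\<lambda>k. f k + g k) \<le> 2 * sq mu f + 2 * sq mu g"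
proof -
  let ?F = "\<lambda>k. (cmod (f k))\<^sup>2 * W mu k" and ?G = "\<lambda>k. (cmod (g k))\<^sup>2 * W mu k"
  have sF: "summable ?F" and sG: "summable ?G" using f g by (auto simp: l2_iff)
  have le: "(cmod (f k + g k))\<^sup>2 * W mu k \<le> 2 * ?F k + 2 * ?G k" for k
  proof -
    have "(cmod (f k + g k))\<^sup>2 \<le> (cmod (f k) + cmod (g k))\<^sup>2"
      by (intro power_mono norm_triangle_ineq) auto
    also have "\<dots> \<le> 2 * (cmod (f k))\<^sup>2 + 2 * (cmod (g k))\<^sup>2"
      by (rule sq2)
    finally have "(cmod (f k + g k))\<^sup>2 * W mu k \<le> (2 * (cmod (f k))\<^sup>2 + 2 * (cmod (g k))\<^sup>2) * W mu k"
      by (rule mult_right_mono) (simp add: W_pos less_imp_le)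
    thus ?thesis by (simp add: algebra_simps)
  qed
  have s2: "summable (\<lambda>k. 2 * ?F k + 2 * ?G k)" by (intro summable_add summable_mult sF sG)
  have le': "norm ((cmod (f k + g k))\<^sup>2 * W mu k) \<le> 2 * ?F k + 2 * ?G k" for k
    using le[of k] term_nn[of "\<lambda>k. f k + g k" k mu] by simp
  have sh: "summable (\<lambda>k. (cmod (f k + g k))\<^sup>2 * W mu k)"
    by (rule summable_comparison_test'[OF s2, of 0]) (rule le')
  have "sq mu (\<lambda>k. f k + g k) \<le> (\<Sum>k. 2 * ?F k + 2 * ?G k)"
    unfolding sq_def by (rule suminf_le[OF le sh s2])
  also have "\<dots> = 2 * sq mu f + 2 * sq mu g" unfolding sq_def
    using suminf_add[OF summable_mult[OF sF] summable_mult[OF sG], of 2 2] suminf_mult[OF sF, of 2] suminf_mult[OF sG, of 2] by simp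
  finally show ?thesis using sh by (simp add: l2_iff)
qed

lemma scale_l2:
  assumes f: "f \<in> l2 mu"
  shows "(\<lambda>k. x * f k) \<in> l2 mu \<and> sq mu (\<lambda>k. x * f k) = (cmod x)\<^sup>2 * sq mu f"
proof -
  have sF: "summable (\<lambda>k. (cmod (f k))\<^sup>2 * W mu k)" using f by (simp add: l2_iff)
  have e: "(\<lambda>k. (cmod (x * f k))\<^sup>2 * W mu k) = (\<lambda>k. (cmod x)\<^sup>2 * ((cmod (f k))\<^sup>2 * W mu k))"
    by (simp add: norm_mult power_mult_distrib mult.assoc)
  show ?thesis unfolding l2_iff sq_def e using summable_mult[OF sF] suminf_mult[OF sF] sF by simp
qed

lemma neg_l2: "f \<in> l2 mu \<Longrightarrow> (\<lambda>k. - f k) \<in> l2 mu \<and> sq mu (\<lambda>k. - f k) = sq mu f"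
  using scale_l2[of f mu "-1"] by simp

lemma diff_l2:
  assumes f: "f \<in> l2 mu" and g: "g \<in> l2 mu"
  shows "(\<lambda>k. f k - g k) \<in> l2 mu \<and> sq mu (\<lambda>k. f k - g k) \<le> 2 * sq mu f + 2 * sq mu g"
  using add_l2[OF f neg_l2[OF g, THEN conjunct1]] neg_l2[OF g] by simp

lemma sq_zero_iff: "u \<in> l2 mu \<Longrightarrow> sq mu u = 0 \<longleftrightarrow> u = (\<lambda>k. 0)"
proof -
  assume u: "u \<in> l2 mu"
  have "sq mu u = 0 \<longleftrightarrow> (\<forall>k. (cmod (u k))\<^sup>2 * W mu k = 0)"
    unfolding sq_def using u by (intro suminf_eq_zero_iff) (auto simp: l2_iff term_nn)
  also have "\<dots> \<longleftrightarrow> u = (\<lambda>k. 0)"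
  proof -
    have "\<forall>k. W mu k \<noteq> 0" using W_pos by (metis less_irrefl)
    thus ?thesis by (auto simp: fun_eq_iff)
  qed
  finally show ?thesis .
qed

lemma fin_l2:
  assumes "\<forall>k\<ge>n. v k = 0"
  shows "v \<in> l2 mu"
proof -
  have e: "(\<lambda>k. if k \<in> {..<n} then (cmod (v k))\<^sup>2 * W mu k else 0) = (\<lambda>k. (cmod (v k))\<^sup>2 * W mu k)"
    using assms by (auto simp: fun_eq_iff)
  show ?thesis unfolding l2_iff using summable_If_finite_set[of "{..<n}" "\<lambda>k. (cmod (v k))\<^sup>2 * W mu k"] unfolding e by simp
qed

lemma trunc_l2: "f \<in> l2 mu \<Longrightarrow> trunc n f \<in> l2 mu \<and> sq mu (trunc n f) \<le> sq mu f"
  using dom0[of f mu 1 "trunc n f" mu] by (auto simp: trunc_def term_nn)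

lemma tail_l2: "f \<in> l2 mu \<Longrightarrow> (\<lambda>n. sq mu (\<lambda>k. f k - trunc n f k)) \<longlonglongrightarrow> 0"
proof -
  assume f: "f \<in> l2 mu"
  let ?F = "\<lambda>k. (cmod (f k))\<^sup>2 * W mu k"
  have sF: "summable ?F" using f by (simp add: l2_iff)
  have "sq mu (\<lambda>k. f k - trunc n f k) = (\<Sum>k. ?F (k + n))" for n
  proof -
    let ?G = "\<lambda>k. (cmod (f k - trunc n f k))\<^sup>2 * W mu k"
    have G: "?G = (\<lambda>k. if k < n then 0 else ?F k)" by (auto simp: fun_eq_iff trunc_def)
    have sG: "summable ?G" unfolding G
      using sF summable_iff_shift[of "\<lambda>k. if k < n then 0 else ?F k" n] summable_iff_shift[of ?F n] by simp
    have "sq mu (\<lambda>k. f k - trunc n f k) = (\<Sum>k. ?G (k + n)) + sum ?G {..<n}"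
      unfolding sq_def by (rule suminf_split_initial_segment[OF sG])
    also have "sum ?G {..<n} = 0" by (simp add: trunc_def)
    also have "(\<lambda>k. ?G (k + n)) = (\<lambda>k. ?F (k + n))" by (simp add: trunc_def)
    finally show ?thesis by simp
  qed
  thus ?thesis using suminf_exist_split2[OF sF] by simp
qed

lemma coord_le: "u \<in> l2 mu \<Longrightarrow> (cmod (u k))\<^sup>2 * W mu k \<le> sq mu u"
  using sum_le_suminf[of "\<lambda>k. (cmod (u k))\<^sup>2 * W mu k" "{k}"] by (simp add: l2_iff sq_def term_nn)

lemma partial_le: "u \<in> l2 mu \<Longrightarrow> (\<Sum>k<(m::nat). (cmod (u k))\<^sup>2 * W mu k) \<le> sq mu u"
  using sum_le_suminf[of "\<lambda>k. (cmod (u k))\<^sup>2 * W mu k" "{..<m}"] by (simp add: l2_iff sq_def term_nn)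

lemma tail_bound:
  assumes f: "f \<in> l2 (mu+1)"
  shows "sq mu f \<le> (\<Sum>k<(m::nat). (cmod (f k))\<^sup>2 * W mu k) + sq (mu+1) f / (real m + 1)\<^sup>2"
proof -
  let ?F = "\<lambda>k. (cmod (f k))\<^sup>2 * W mu k" and ?G = "\<lambda>k. (cmod (f k))\<^sup>2 * W (mu+1) k"
  have f0: "f \<in> l2 mu" using l2_mono[OF f, of mu] by simp
  have sF: "summable ?F" using f0 by (simp add: l2_iff)
  have sG: "summable ?G" using f by (simp add: l2_iff)
  have sFm: "summable (\<lambda>j. ?F (j+m))" using sF summable_iff_shift[of ?F m] by blast
  have sGm: "summable (\<lambda>j. ?G (j+m))" using sG summable_iff_shift[of ?G m] by blast
  have pos: "(real m + 1)\<^sup>2 > 0" by simp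
  have le: "?F (j+m) \<le> ?G (j+m) / (real m + 1)\<^sup>2" for j
  proof -
    have "(real m + 1)\<^sup>2 \<le> (real (j+m) + 1)\<^sup>2" by (intro power_mono) auto
    hence "(real m + 1)\<^sup>2 * ?F (j+m) \<le> (real (j+m) + 1)\<^sup>2 * ?F (j+m)"
      by (intro mult_right_mono term_nn)
    also have "\<dots> = ?G (j+m)" unfolding W_suc by (simp add: algebra_simps)
    finally show ?thesis using pos by (simp add: field_simps)
  qed
  have "sq mu f = (\<Sum>j. ?F (j+m)) + sum ?F {..<m}" unfolding sq_def by (rule suminf_split_initial_segment[OF sF])
  also have "(\<Sum>j. ?F (j+m)) \<le> (\<Sum>j. ?G (j+m) / (real m + 1)\<^sup>2)"
    by (rule suminf_le[OF le sFm]) (intro summable_divide sGm)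
  also have "\<dots> = (\<Sum>j. ?G (j+m)) / (real m + 1)\<^sup>2" using suminf_divide[OF sGm, of "(real m + 1)\<^sup>2"] by simp
  also have "(\<Sum>j. ?G (j+m)) \<le> sq (mu+1) f"
  proof -
    have "sq (mu+1) f = (\<Sum>j. ?G (j+m)) + sum ?G {..<m}" unfolding sq_def by (rule suminf_split_initial_segment[OF sG])
    moreover have "0 \<le> sum ?G {..<m}" by (intro sum_nonneg) (simp add: term_nn)
    ultimately show ?thesis by linarith
  qed
  hence "(\<Sum>j. ?G (j+m)) / (real m + 1)\<^sup>2 \<le> sq (mu+1) f / (real m + 1)\<^sup>2"
    using pos by (simp add: divide_right_mono)
  finally show ?thesis by simp
qed

lemma compact_emb:
  fixes y :: "nat \<Rightarrow> seq"
  assumes y: "\<forall>n. y n \<in> l2 (mu+1)" and M: "\<forall>n. sq (mu+1) (y n) \<le> M"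
  shows "\<exists>r z. strict_mono r \<and> z \<in> l2 (mu+1) \<and> (\<lambda>n. sq mu (\<lambda>k. y (r n) k - z k)) \<longlonglongrightarrow> 0"
proof -
  have M0: "0 \<le> M" using M sq_nn[OF y[rule_format, of 0]] by (metis order_trans)
  have bnd: "bounded (range (\<lambda>n. y n k))" for k
  proof (rule boundedI)
    fix x assume "x \<in> range (\<lambda>n. y n k)"
    then obtain n where x: "x = y n k" by auto
    have "(cmod (y n k))\<^sup>2 * W (mu+1) k \<le> M" using coord_le[OF y[rule_format, of n], of k] M by (metis order_trans)
    hence "(cmod (y n k))\<^sup>2 \<le> M / W (mu+1) k" using W_pos[of "mu+1" k] by (simp add: field_simps)
    hence "cmod (y n k) \<le> sqrt (M / W (mu+1) k)" using real_le_rsqrt by blast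
    thus "norm x \<le> sqrt (M / W (mu+1) k)" using x by simp
  qed
  interpret ss: subseqs "\<lambda>k s. convergent (\<lambda>i. y (s i) k)"
  proof
    fix k and s :: "nat \<Rightarrow> nat" assume "strict_mono s"
    have "bounded (range (\<lambda>i. y (s i) k))" by (rule bounded_subset[OF bnd[of k]]) auto
    then obtain l r where "strict_mono r" "((\<lambda>i. y (s i) k) \<circ> r) \<longlonglongrightarrow> l"
      using bounded_imp_convergent_subsequence by blast
    thus "\<exists>r'. strict_mono r' \<and> convergent (\<lambda>i. y ((s \<circ> r') i) k)"
      by (auto simp: convergent_def o_def)
  qed
  define r where "r = ss.diagseq"
  have r: "strict_mono r" unfolding r_def by (rule ss.subseq_diagseq)
  have conv: "convergent (\<lambda>i. y (r i) k)" for k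
  proof -
    have "convergent (\<lambda>i. y ((ss.diagseq \<circ> (+) (Suc k)) i) k)"
    proof (rule ss.diagseq_holds)
      fix r' :: "nat \<Rightarrow> nat" and s n assume "strict_mono r'" "convergent (\<lambda>i. y (s i) n)"
      thus "convergent (\<lambda>i. y ((s \<circ> r') i) n)"
        using LIMSEQ_subseq_LIMSEQ by (auto simp: convergent_def o_def)
    qed
    then obtain l where "(\<lambda>i. y (ss.diagseq (Suc k + i)) k) \<longlonglongrightarrow> l" by (auto simp: convergent_def o_def)
    hence "(\<lambda>i. y (ss.diagseq (i + Suc k)) k) \<longlonglongrightarrow> l" by (simp add: add.commute)
    hence "(\<lambda>i. y (ss.diagseq i) k) \<longlonglongrightarrow> l" by (rule LIMSEQ_offset)
    thus ?thesis unfolding r_def convergent_def by blast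
  qed
  define z where "z k = lim (\<lambda>i. y (r i) k)" for k
  have zl: "(\<lambda>i. y (r i) k) \<longlonglongrightarrow> z k" for k
    unfolding z_def using conv[of k] by (simp add: convergent_LIMSEQ_iff)
  have part: "(\<Sum>k<m. (cmod (z k))\<^sup>2 * W (mu+1) k) \<le> M" for m
  proof -
    have "(\<lambda>i. \<Sum>k<m. (cmod (y (r i) k))\<^sup>2 * W (mu+1) k) \<longlonglongrightarrow> (\<Sum>k<m. (cmod (z k))\<^sup>2 * W (mu+1) k)"
      by (intro tendsto_intros zl)
    moreover have "(\<Sum>k<m. (cmod (y (r i) k))\<^sup>2 * W (mu+1) k) \<le> M" for i
      using partial_le[OF y[rule_format, of "r i"], of m] M by (metis order_trans)
    ultimately show ?thesis by (intro LIMSEQ_le_const2) auto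
  qed
  have sz: "summable (\<lambda>k. (cmod (z k))\<^sup>2 * W (mu+1) k)"
    by (rule bounded_imp_summable[where B = M]) (use part[of "Suc _"] in \<open>auto simp: term_nn lessThan_Suc_atMost[symmetric]\<close>)
  hence z: "z \<in> l2 (mu+1)" by (simp add: l2_iff)
  have zM: "sq (mu+1) z \<le> M" unfolding sq_def by (rule suminf_le_const[OF sz part])
  define d where "d i = (\<lambda>k. y (r i) k - z k)" for i
  have d: "d i \<in> l2 (mu+1)" and dM: "sq (mu+1) (d i) \<le> 4 * M" for i
    using diff_l2[OF y[rule_format, of "r i"] z] M[rule_format, of "r i"] zM unfolding d_def by auto
  have fin: "(\<lambda>i. \<Sum>k<m. (cmod (d i k))\<^sup>2 * W mu k) \<longlonglongrightarrow> 0" for m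
  proof -
    have "(\<lambda>i. \<Sum>k<m. (cmod (d i k))\<^sup>2 * W mu k) \<longlonglongrightarrow> (\<Sum>k<m. (cmod (z k - z k))\<^sup>2 * W mu k)"
      unfolding d_def by (intro tendsto_intros zl)
    thus ?thesis by simp
  qed
  show ?thesis
  proof (intro exI conjI)
    show "strict_mono r" by (rule r)
    show "z \<in> l2 (mu+1)" by (rule z)
    show "(\<lambda>n. sq mu (\<lambda>k. y (r n) k - z k)) \<longlonglongrightarrow> 0"
    proof (rule LIMSEQ_I)
      fix e :: real assume e: "0 < e"
      obtain m :: nat where m: "8 * M / e < real m" using reals_Archimedean2 by blast
      have "4 * M / (real m + 1)\<^sup>2 < e / 2"
      proof -
        have "real m + 1 \<le> (real m + 1)\<^sup>2" by (simp add: power2_eq_square)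
        hence "8 * M / e < (real m + 1)\<^sup>2" using m by linarith
        hence "8 * M < e * (real m + 1)\<^sup>2" using e by (simp add: field_simps)
        thus ?thesis by (simp add: field_simps)
      qed
      moreover obtain no where no: "\<forall>i\<ge>no. norm ((\<Sum>k<m. (cmod (d i k))\<^sup>2 * W mu k) - 0) < e / 2"
        using LIMSEQ_D[OF fin[of m], of "e/2"] e by auto
      have "norm (sq mu (\<lambda>k. y (r i) k - z k) - 0) < e" if i: "i \<ge> no" for i
      proof -
        have "sq mu (d i) \<le> (\<Sum>k<m. (cmod (d i k))\<^sup>2 * W mu k) + sq (mu+1) (d i) / (real m + 1)\<^sup>2"
          by (rule tail_bound[OF d])
        moreover have "sq (mu+1) (d i) / (real m + 1)\<^sup>2 \<le> 4 * M / (real m + 1)\<^sup>2"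
          using dM[of i] by (simp add: divide_right_mono)
        moreover have "0 \<le> sq mu (d i)" using l2_mono[OF d[of i], of mu] sq_nn by auto
        moreover have "(\<Sum>k<m. (cmod (d i k))\<^sup>2 * W mu k) < e / 2" using no i by auto
        ultimately show ?thesis using \<open>4 * M / (real m + 1)\<^sup>2 < e / 2\<close> unfolding d_def by auto
      qed
      thus "\<exists>no. \<forall>n\<ge>no. norm (sq mu (\<lambda>k. y (r n) k - z k) - 0) < e" by blast
    qed
  qed
qed

lemma W_shift:
  shows "W mu j \<le> (real s + 1) powr (2*\<bar>mu\<bar>) * W mu (j+s)"
    and "W mu (j+s) \<le> (real s + 1) powr (2*\<bar>mu\<bar>) * W mu j"
proof -
  define x where "x = real j + 1"
  define y where "y = real (j+s) + 1"
  define K where "K = real s + 1"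
  have x1: "1 \<le> x" and xy: "x \<le> y" and yK: "y \<le> K * x" and K1: "1 \<le> K"
    unfolding x_def y_def K_def by (auto simp: algebra_simps)
  have x0: "0 < x" using x1 by simp
  have W1: "W mu j = x powr (2*mu)" and W2: "W mu (j+s) = y powr (2*mu)" unfolding W_def x_def y_def by auto
  have Kp: "1 \<le> K powr (2*\<bar>mu\<bar>)" using K1 by (simp add: ge_one_powr_ge_zero)
  have "x powr (2*mu) \<le> K powr (2*\<bar>mu\<bar>) * y powr (2*mu) \<and> y powr (2*mu) \<le> K powr (2*\<bar>mu\<bar>) * x powr (2*mu)"
  proof (cases "mu \<ge> 0")
    case True
    have a: "x powr (2*mu) \<le> y powr (2*mu)" using True x0 xy by (intro powr_mono2) auto
    have "y powr (2*mu) \<le> (K * x) powr (2*mu)" using True x0 yK xy by (intro powr_mono2) auto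
    also have "\<dots> = K powr (2*\<bar>mu\<bar>) * x powr (2*mu)" using True K1 x0 by (simp add: powr_mult)
    finally have b: "y powr (2*mu) \<le> K powr (2*\<bar>mu\<bar>) * x powr (2*mu)" .
    have "y powr (2*mu) \<le> K powr (2*\<bar>mu\<bar>) * y powr (2*mu)" using mult_right_mono[OF Kp, of "y powr (2*mu)"] by simp
    with a b show ?thesis by linarith
  next
    case False
    have a: "y powr (2*mu) \<le> x powr (2*mu)" using False x0 xy by (intro powr_mono2') auto
    have "y / K \<le> x" using yK K1 by (simp add: field_simps)
    hence "x powr (2*mu) \<le> (y / K) powr (2*mu)" using False x0 K1 xy by (intro powr_mono2') auto
    also have "\<dots> = y powr (2*mu) / K powr (2*mu)" using x0 xy K1 by (simp add: powr_divide)
    also have "\<dots> = K powr (2*\<bar>mu\<bar>) * y powr (2*mu)" using False K1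
      by (simp add: powr_minus_divide[symmetric] powr_minus divide_inverse mult.commute)
    finally have b: "x powr (2*mu) \<le> K powr (2*\<bar>mu\<bar>) * y powr (2*mu)" .
    have "x powr (2*mu) \<le> K powr (2*\<bar>mu\<bar>) * x powr (2*mu)" using mult_right_mono[OF Kp, of "x powr (2*mu)"] by simp
    with a b show ?thesis by linarith
  qed
  thus "W mu j \<le> (real s + 1) powr (2*\<bar>mu\<bar>) * W mu (j+s)"
    and "W mu (j+s) \<le> (real s + 1) powr (2*\<bar>mu\<bar>) * W mu j" unfolding W1 W2 K_def by auto
qed

definition bnd :: "real \<Rightarrow> real \<Rightarrow> (seq \<Rightarrow> seq) \<Rightarrow> bool" where
  "bnd mu nu T \<longleftrightarrow> (\<exists>C\<ge>0. \<forall>v\<in>l2 mu. T v \<in> l2 nu \<and> sq nu (T v) \<le> C * sq mu v)"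

lemma bnd_comp: "bnd mu nu T \<Longrightarrow> bnd nu rho S \<Longrightarrow> bnd mu rho (\<lambda>v. S (T v))"
  unfolding bnd_def
proof (elim exE conjE)
  fix C1 C2 assume C1: "C1 \<ge> 0" "\<forall>v\<in>l2 mu. T v \<in> l2 nu \<and> sq nu (T v) \<le> C1 * sq mu v"
    and C2: "C2 \<ge> 0" "\<forall>v\<in>l2 nu. S v \<in> l2 rho \<and> sq rho (S v) \<le> C2 * sq nu v"
  show "\<exists>C\<ge>0. \<forall>v\<in>l2 mu. S (T v) \<in> l2 rho \<and> sq rho (S (T v)) \<le> C * sq mu v"
  proof (intro exI[of _ "C2*C1"] conjI ballI)
    show "0 \<le> C2 * C1" using C1 C2 by simp
    fix v assume v: "v \<in> l2 mu"
    show "S (T v) \<in> l2 rho" using C1 C2 v by blast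
    have "sq rho (S (T v)) \<le> C2 * sq nu (T v)" using C1 C2 v by blast
    also have "\<dots> \<le> C2 * (C1 * sq mu v)" using C1 C2 v by (intro mult_left_mono) auto
    finally show "sq rho (S (T v)) \<le> C2 * C1 * sq mu v" by simp
  qed
qed

lemma bnd_target: "bnd mu nu T \<Longrightarrow> rho \<le> nu \<Longrightarrow> bnd mu rho T"
  unfolding bnd_def by (meson l2_mono order_trans)

lemma bnd_id: "bnd mu mu (\<lambda>v. v)"
  unfolding bnd_def by (intro exI[of _ 1]) auto

lemma bnd_zero: "bnd mu nu (\<lambda>v k. 0)"
proof -
  have z: "(\<lambda>k::nat. 0::complex) \<in> l2 nu" by (rule fin_l2[of 0]) auto
  have "sq nu (\<lambda>k. 0) = 0" using sq_zero_iff[OF z] by simp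
  thus ?thesis using z unfolding bnd_def by (intro exI[of _ 0]) auto
qed

lemma bnd_add: "bnd mu nu T \<Longrightarrow> bnd mu nu S \<Longrightarrow> bnd mu nu (\<lambda>v k. T v k + S v k)"
  unfolding bnd_def
proof (elim exE conjE)
  fix C1 C2 assume C1: "C1 \<ge> 0" "\<forall>v\<in>l2 mu. T v \<in> l2 nu \<and> sq nu (T v) \<le> C1 * sq mu v"
    and C2: "C2 \<ge> 0" "\<forall>v\<in>l2 mu. S v \<in> l2 nu \<and> sq nu (S v) \<le> C2 * sq mu v"
  show "\<exists>C\<ge>0. \<forall>v\<in>l2 mu. (\<lambda>k. T v k + S v k) \<in> l2 nu \<and> sq nu (\<lambda>k. T v k + S v k) \<le> C * sq mu v"
  proof (intro exI[of _ "2*C1 + 2*C2"] conjI ballI)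
    show "0 \<le> 2*C1 + 2*C2" using C1 C2 by simp
    fix v assume v: "v \<in> l2 mu"
    have T: "T v \<in> l2 nu" and S: "S v \<in> l2 nu" using C1 C2 v by auto
    show "(\<lambda>k. T v k + S v k) \<in> l2 nu" using add_l2[OF T S] by simp
    have "sq nu (\<lambda>k. T v k + S v k) \<le> 2 * sq nu (T v) + 2 * sq nu (S v)" using add_l2[OF T S] by simp
    also have "\<dots> \<le> 2 * (C1 * sq mu v) + 2 * (C2 * sq mu v)" using C1 C2 v by (intro add_mono) auto
    finally show "sq nu (\<lambda>k. T v k + S v k) \<le> (2*C1 + 2*C2) * sq mu v" by (simp add: algebra_simps)
  qed
qed

lemma bnd_neg: "bnd mu nu T \<Longrightarrow> bnd mu nu (\<lambda>v k. - T v k)"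
  unfolding bnd_def using neg_l2 by metis

lemma bnd_diff: "bnd mu nu T \<Longrightarrow> bnd mu nu S \<Longrightarrow> bnd mu nu (\<lambda>v k. T v k - S v k)"
  using bnd_add[of mu nu T "\<lambda>v k. - S v k"] bnd_neg[of mu nu S] by simp

lemma bnd_sum: "finite F \<Longrightarrow> (\<forall>l\<in>F. bnd mu nu (T l)) \<Longrightarrow> bnd mu nu (\<lambda>v k. \<Sum>l\<in>F. T l v k)"
proof (induction F rule: finite_induct)
  case empty thus ?case using bnd_zero by simp
next
  case (insert x F)
  thus ?case using bnd_add[of mu nu "T x" "\<lambda>v k. \<Sum>l\<in>F. T l v k"] by simp
qed

lemma bnd_dom:
  assumes C: "C \<ge> 0" and le: "\<And>v j. (cmod (T v j))\<^sup>2 * W nu j \<le> C * ((cmod (v (j+s)))\<^sup>2 * W mu (j+s))"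
  shows "bnd mu nu T"
proof -
  { fix v assume "v \<in> l2 mu" hence "T v \<in> l2 nu \<and> sq nu (T v) \<le> C * sq mu v" by (rule dom[OF _ C le]) }
  thus ?thesis using C unfolding bnd_def by blast
qed

lemma Dop_bnd: "bnd (mu+1) mu (Dop l)"
proof -
  define c where "c = (2 ^ (l - 1) * fact (l - 1) :: real)"
  define K where "K = (real l + 1) powr (2*\<bar>mu\<bar>)"
  have K0: "K \<ge> 0" unfolding K_def by simp
  show ?thesis
  proof (rule bnd_dom[where s = l and C = "c^2 * K"])
    show "0 \<le> c^2 * K" using K0 by simp
    fix v j
    have a: "(real (j+l))\<^sup>2 \<le> (real (j+l) + 1)\<^sup>2" by (intro power_mono) auto
    have "(cmod (Dop l v j))\<^sup>2 = (c * real (j+l))\<^sup>2 * (cmod (v (j+l)))\<^sup>2"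
      by (simp only: Dop_def norm_mult norm_of_real c_def power_mult_distrib power2_abs)
    hence "(cmod (Dop l v j))\<^sup>2 * W mu j = c^2 * (real (j+l))\<^sup>2 * ((cmod (v (j+l)))\<^sup>2 * W mu j)"
      by (simp add: power_mult_distrib)
    also have "\<dots> \<le> c^2 * (real (j+l) + 1)\<^sup>2 * ((cmod (v (j+l)))\<^sup>2 * W mu j)"
      using a by (intro mult_right_mono mult_left_mono term_nn) auto
    also have "\<dots> \<le> c^2 * (real (j+l) + 1)\<^sup>2 * ((cmod (v (j+l)))\<^sup>2 * (K * W mu (j+l)))"
      using W_shift(1)[of mu j l] unfolding K_def by (intro mult_left_mono) auto
    also have "\<dots> = c^2 * K * ((cmod (v (j+l)))\<^sup>2 * W (mu+1) (j+l))"
      unfolding W_suc by (simp add: algebra_simps)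
    finally show "(cmod (Dop l v j))\<^sup>2 * W mu j \<le> c^2 * K * ((cmod (v (j+l)))\<^sup>2 * W (mu+1) (j+l))" .
  qed
qed

lemma bnd_mult_shift:
  assumes le: "\<And>j. (cmod (g j))\<^sup>2 * W nu j \<le> C * W mu (j+s)" and C: "C \<ge> 0"
  shows "bnd mu nu (\<lambda>v j. g j * v (j+s))"
proof (rule bnd_dom[where s = s and C = C, OF C])
  fix v j
  have "(cmod (g j * v (j+s)))\<^sup>2 * W nu j = (cmod (v (j+s)))\<^sup>2 * ((cmod (g j))\<^sup>2 * W nu j)"
    by (simp add: norm_mult power_mult_distrib)
  also have "\<dots> \<le> (cmod (v (j+s)))\<^sup>2 * (C * W mu (j+s))" by (intro mult_left_mono le) simp
  finally show "(cmod (g j * v (j+s)))\<^sup>2 * W nu j \<le> C * ((cmod (v (j+s)))\<^sup>2 * W mu (j+s))"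
    by (simp add: algebra_simps)
qed

lemma K3: "W mu j \<le> 3 powr (2*\<bar>mu\<bar>) * W mu (j+2)"
  using W_shift(1)[of mu j 2] by simp

lemma Sop_gain: assumes l: "l \<ge> 1" shows "bnd mu (mu+1) (Sop l)"
proof -
  define P1 where "P1 = (\<lambda>v j. complex_of_real (real l / (real l + real j)) * v (j+0))"
  define P2 where "P2 = (\<lambda>v j. complex_of_real (real l / (real l + real j + 2)) * v (j+2))"
  have e: "Sop l = (\<lambda>v j. P1 v j - P2 v j)" using l by (auto simp: fun_eq_iff Sop_def P1_def P2_def)
  have a1: "(real l / (real l + real j))\<^sup>2 * (real j + 1)\<^sup>2 \<le> (real l)\<^sup>2" for j
  proof -
    define al where "al = real l / (real l + real j)"
    have "al * (real j + 1) \<le> real l" using l unfolding al_def by (simp add: field_simps)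
    moreover have "0 \<le> al * (real j + 1)" unfolding al_def by simp
    ultimately have "(al * (real j + 1))\<^sup>2 \<le> (real l)\<^sup>2" by (intro power_mono) auto
    thus ?thesis unfolding al_def[symmetric] by (simp add: power_mult_distrib)
  qed
  have a2: "(real l / (real l + real j + 2))\<^sup>2 * (real j + 1)\<^sup>2 \<le> (real l)\<^sup>2" for j
  proof -
    define al where "al = real l / (real l + real j + 2)"
    have "al * (real j + 1) \<le> real l" using l unfolding al_def by (simp add: field_simps)
    moreover have "0 \<le> al * (real j + 1)" unfolding al_def by simp
    ultimately have "(al * (real j + 1))\<^sup>2 \<le> (real l)\<^sup>2" by (intro power_mono) auto
    thus ?thesis unfolding al_def[symmetric] by (simp add: power_mult_distrib)
  qed
  have b1: "bnd mu (mu+1) P1" unfolding P1_def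
  proof (rule bnd_mult_shift[where C = "(real l)\<^sup>2"])
    fix j
    have "(cmod (complex_of_real (real l / (real l + real j))))\<^sup>2 * W (mu + 1) j
        = ((real l / (real l + real j))\<^sup>2 * (real j + 1)\<^sup>2) * W mu j" by (simp only: W_suc norm_of_real power2_abs; simp add: algebra_simps)
    also have "\<dots> \<le> (real l)\<^sup>2 * W mu j" using a1 by (intro mult_right_mono) (auto simp: W_pos less_imp_le)
    finally show "(cmod (complex_of_real (real l / (real l + real j))))\<^sup>2 * W (mu + 1) j \<le> (real l)\<^sup>2 * W mu (j + 0)" by simp
  qed simp
  have b2: "bnd mu (mu+1) P2" unfolding P2_def
  proof (rule bnd_mult_shift[where C = "(real l)\<^sup>2 * 3 powr (2*\<bar>mu\<bar>)"])
    fix j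
    have "(cmod (complex_of_real (real l / (real l + real j + 2))))\<^sup>2 * W (mu + 1) j
        = ((real l / (real l + real j + 2))\<^sup>2 * (real j + 1)\<^sup>2) * W mu j" by (simp only: W_suc norm_of_real power2_abs; simp add: algebra_simps)
    also have "\<dots> \<le> (real l)\<^sup>2 * W mu j" using a2 by (intro mult_right_mono) (auto simp: W_pos less_imp_le)
    also have "\<dots> \<le> (real l)\<^sup>2 * (3 powr (2*\<bar>mu\<bar>) * W mu (j+2))" by (intro mult_left_mono K3) auto
    finally show "(cmod (complex_of_real (real l / (real l + real j + 2))))\<^sup>2 * W (mu + 1) j
       \<le> (real l)\<^sup>2 * 3 powr (2*\<bar>mu\<bar>) * W mu (j + 2)" by simp
  qed simp
  show ?thesis unfolding e by (rule bnd_diff[OF b1 b2])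
qed

lemma Sop0_bnd: "bnd mu mu (Sop 0)"
proof -
  define Q1 :: "seq \<Rightarrow> seq" where "Q1 = (\<lambda>v j. (if j = 0 then 1 else 1/2 :: complex) * v (j+0))"
  define Q2 :: "seq \<Rightarrow> seq" where "Q2 = (\<lambda>v j. (1/2 :: complex) * v (j+2))"
  have e: "Sop 0 = (\<lambda>v j. Q1 v j - Q2 v j)" by (auto simp: fun_eq_iff Sop_def Q1_def Q2_def diff_divide_distrib numeral_2_eq_2)
  have b1: "bnd mu mu Q1" unfolding Q1_def
    by (rule bnd_mult_shift[where C = 1]) (auto simp: W_pos less_imp_le power2_eq_square)
  have b2: "bnd mu mu Q2" unfolding Q2_def
  proof (rule bnd_mult_shift[where C = "3 powr (2*\<bar>mu\<bar>)"])
    fix j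
    have "(cmod (1/2 :: complex))\<^sup>2 * W mu j \<le> 1 * W mu j" by (intro mult_right_mono) (auto simp: W_pos less_imp_le power2_eq_square)
    also have "\<dots> \<le> 3 powr (2*\<bar>mu\<bar>) * W mu (j+2)" using K3[of mu j] by simp
    finally show "(cmod (1/2 :: complex))\<^sup>2 * W mu j \<le> 3 powr (2*\<bar>mu\<bar>) * W mu (j+2)" by simp
  qed simp
  show ?thesis unfolding e by (rule bnd_diff[OF b1 b2])
qed

lemma Sop_bnd: "bnd mu mu (Sop l)"
proof (cases "l = 0")
  case True thus ?thesis using Sop0_bnd by simp
next
  case False thus ?thesis using bnd_target[OF Sop_gain[of l mu], of mu] by simp
qed

lemma Schain_bnd: "bnd mu mu (Schain lo hi)"
proof (induction hi)
  case 0
  have "Schain lo 0 = (\<lambda>v. v)" by (rule ext) simp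
  thus ?case using bnd_id by simp
next
  case (Suc h)
  show ?case
  proof (cases "h < lo")
    case True thus ?thesis using bnd_id by simp
  next
    case False thus ?thesis using bnd_comp[OF Suc Sop_bnd[of mu h]] by simp
  qed
qed

lemma Schain_gain: assumes lo: "lo \<ge> 1" shows "bnd mu (mu + real (hi - lo)) (Schain lo hi)"
proof (induction hi)
  case 0 thus ?case using bnd_id by simp
next
  case (Suc h)
  show ?case
  proof (cases "h < lo")
    case True thus ?thesis using bnd_id by simp
  next
    case False
    hence h: "h \<ge> 1" "Suc h - lo = (h - lo) + 1" using lo by auto
    have "bnd mu (mu + real (h - lo) + 1) (\<lambda>v. Sop h (Schain lo h v))"
      by (rule bnd_comp[OF Suc Sop_gain[OF h(1)]])
    thus ?thesis using False h by (simp add: algebra_simps)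
  qed
qed

lemma rshift_bnd: assumes T: "bnd mu mu T" shows "bnd mu mu (\<lambda>v i. if i < N then 0 else T v (i - N))"
proof -
  obtain C where C: "C \<ge> 0" "\<forall>v\<in>l2 mu. T v \<in> l2 mu \<and> sq mu (T v) \<le> C * sq mu v"
    using T unfolding bnd_def by blast
  define K where "K = (real N + 1) powr (2*\<bar>mu\<bar>)"
  have K0: "K \<ge> 0" unfolding K_def by simp
  have main: "(\<lambda>i. if i < N then 0 else h (i - N)) \<in> l2 mu \<and> sq mu (\<lambda>i. if i < N then 0 else h (i - N)) \<le> K * sq mu h"
    if h: "h \<in> l2 mu" for h
  proof -
    define g where "g = (\<lambda>i. if i < N then 0 else h (i - N))"
    let ?G = "\<lambda>i. (cmod (g i))\<^sup>2 * W mu i" and ?H = "\<lambda>i. (cmod (h i))\<^sup>2 * W mu i"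
    have sH: "summable ?H" using h by (simp add: l2_iff)
    have le: "?G (j+N) \<le> K * ?H j" for j
    proof -
      have "?G (j+N) = (cmod (h j))\<^sup>2 * W mu (j+N)" by (simp add: g_def)
      also have "\<dots> \<le> (cmod (h j))\<^sup>2 * (K * W mu j)" unfolding K_def by (intro mult_left_mono W_shift(2)) auto
      finally show ?thesis by (simp add: algebra_simps)
    qed
    have sGN: "summable (\<lambda>j. ?G (j+N))"
      by (rule summable_comparison_test'[of "\<lambda>j. K * ?H j" 0]) (use le in \<open>auto intro: summable_mult sH simp: abs_of_nonneg term_nn\<close>)
    have sG: "summable ?G" using sGN summable_iff_shift[of ?G N] by blast
    have "sq mu g = (\<Sum>j. ?G (j+N)) + sum ?G {..<N}" unfolding sq_def by (rule suminf_split_initial_segment[OF sG])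
    also have "sum ?G {..<N} = 0" by (simp add: g_def)
    also have "(\<Sum>j. ?G (j+N)) \<le> (\<Sum>j. K * ?H j)" by (rule suminf_le[OF le sGN]) (intro summable_mult sH)
    also have "\<dots> = K * sq mu h" unfolding sq_def using suminf_mult[OF sH, of K] by simp
    finally show ?thesis using sG unfolding g_def by (simp add: l2_iff)
  qed
  show ?thesis unfolding bnd_def
  proof (intro exI[of _ "K*C"] conjI ballI)
    show "0 \<le> K*C" using K0 C by simp
    fix v assume v: "v \<in> l2 mu"
    have Tv: "T v \<in> l2 mu" and Tle: "sq mu (T v) \<le> C * sq mu v" using C v by auto
    show "(\<lambda>i. if i < N then 0 else T v (i - N)) \<in> l2 mu" using main[OF Tv] by simp
    have "sq mu (\<lambda>i. if i < N then 0 else T v (i - N)) \<le> K * sq mu (T v)" using main[OF Tv] by simp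
    also have "\<dots> \<le> K * (C * sq mu v)" using Tle K0 by (rule mult_left_mono)
    finally show "sq mu (\<lambda>i. if i < N then 0 else T v (i - N)) \<le> K * C * sq mu v" by simp
  qed
qed

lemma fin_bnd:
  assumes CB: "\<forall>v\<in>l2 D. \<forall>i<N. cmod (Bapp b v i) \<le> CB * l2norm D v" and D: "D \<le> mu"
  shows "bnd mu mu (\<lambda>v i. if i < N then Bapp b v i - v i else 0)"
  unfolding bnd_def
proof (intro exI[of _ "\<Sum>i<N. 2 * CB^2 * W mu i + 2"] conjI ballI)
  show "0 \<le> (\<Sum>i<N. 2 * CB^2 * W mu i + 2)" by (intro sum_nonneg) (simp add: W_pos less_imp_le)
  fix v assume v: "v \<in> l2 mu"
  define g where "g = (\<lambda>i. if i < N then Bapp b v i - v i else 0)"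
  have vD: "v \<in> l2 D" and sqD: "sq D v \<le> sq mu v" using l2_mono[OF v D] by auto
  have g: "g \<in> l2 mu" unfolding g_def by (rule fin_l2[of N]) auto
  have le: "(cmod (g i))\<^sup>2 * W mu i \<le> (2 * CB^2 * W mu i + 2) * sq mu v" if i: "i < N" for i
  proof -
    have b1: "cmod (Bapp b v i) \<le> CB * sqrt (sq D v)" using CB vD i by (simp add: l2norm_sq)
    have "(cmod (Bapp b v i))\<^sup>2 \<le> (CB * sqrt (sq D v))\<^sup>2" by (intro power_mono b1) simp
    also have "\<dots> = CB^2 * sq D v" using sq_nn[OF vD] by (simp add: power_mult_distrib)
    also have "\<dots> \<le> CB^2 * sq mu v" using sqD by (intro mult_left_mono) auto
    finally have bb: "(cmod (Bapp b v i))\<^sup>2 \<le> CB^2 * sq mu v" .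
    have "(cmod (g i))\<^sup>2 \<le> (cmod (Bapp b v i) + cmod (v i))\<^sup>2"
      unfolding g_def using i norm_triangle_ineq4[of "Bapp b v i" "v i"] by (intro power_mono) auto
    also have "\<dots> \<le> 2 * (cmod (Bapp b v i))\<^sup>2 + 2 * (cmod (v i))\<^sup>2" by (rule sq2)
    finally have "(cmod (g i))\<^sup>2 * W mu i \<le> (2 * (cmod (Bapp b v i))\<^sup>2 + 2 * (cmod (v i))\<^sup>2) * W mu i"
      by (rule mult_right_mono) (simp add: W_pos less_imp_le)
    also have "\<dots> = 2 * (cmod (Bapp b v i))\<^sup>2 * W mu i + 2 * ((cmod (v i))\<^sup>2 * W mu i)" by (simp add: algebra_simps)
    also have "\<dots> \<le> 2 * (CB^2 * sq mu v) * W mu i + 2 * sq mu v"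
      using bb coord_le[OF v, of i] by (intro add_mono mult_right_mono mult_left_mono) (auto simp: W_pos less_imp_le)
    finally show ?thesis by (simp add: algebra_simps)
  qed
  have "sq mu g = (\<Sum>i<N. (cmod (g i))\<^sup>2 * W mu i)" unfolding sq_def
    by (rule suminf_finite) (auto simp: g_def)
  also have "\<dots> \<le> (\<Sum>i<N. (2 * CB^2 * W mu i + 2) * sq mu v)" by (intro sum_mono le) simp
  also have "\<dots> = (\<Sum>i<N. 2 * CB^2 * W mu i + 2) * sq mu v" by (simp add: sum_distrib_right)
  finally show "sq mu (\<lambda>i. if i < N then Bapp b v i - v i else 0) \<le> (\<Sum>i<N. 2 * CB^2 * W mu i + 2) * sq mu v"
    unfolding g_def .
  show "(\<lambda>i. if i < N then Bapp b v i - v i else 0) \<in> l2 mu" using g unfolding g_def .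
qed

definition dd :: "nat \<Rightarrow> nat \<Rightarrow> complex" where
  "dd N i = (if i < N then 1 else of_real (2 ^ (N - 1) * fact (N - 1) * real i))"
definition low :: "nat \<Rightarrow> (nat \<Rightarrow> real \<Rightarrow> complex) \<Rightarrow> seq \<Rightarrow> seq" where
  "low N a v j = (\<Sum>l\<in>{1..<N}. Schain l N (Mop l (a l) (Dop l v)) j) + Schain 0 N (Mop 0 (a 0) v) j"
definition KK :: "nat \<Rightarrow> (nat \<Rightarrow> nat \<Rightarrow> complex) \<Rightarrow> (nat \<Rightarrow> real \<Rightarrow> complex) \<Rightarrow> seq \<Rightarrow> seq" where
  "KK N b a v i = (if i < N then Bapp b v i - v i else low N a v (i - N))"

lemma BL_split: "BL N b a v i = dd N i * v i + KK N b a v i"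
proof (cases "i < N")
  case True thus ?thesis by (simp add: BL_def dd_def KK_def)
next
  case False
  hence e: "i - N + N = i" by simp
  show ?thesis using False unfolding BL_def dd_def KK_def Lop_def low_def Dop_def e by (simp add: algebra_simps)
qed

lemma low_bnd:
  assumes Mb: "\<forall>l<N. \<forall>mu. bnd mu mu (Mop l (a l))" and N: "N \<ge> 1"
  shows "bnd (mu+1) (mu+1) (low N a)"
proof -
  have t: "bnd (mu+1) (mu+1) (\<lambda>v. Schain l N (Mop l (a l) (Dop l v)))" if l: "l \<in> {1..<N}" for l
  proof -
    have "bnd (mu+1) mu (\<lambda>v. Mop l (a l) (Dop l v))"
      using bnd_comp[OF Dop_bnd[of mu l], where S = "Mop l (a l)" and rho = mu] Mb l by auto
    moreover have "bnd mu (mu+1) (Schain l N)"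
      using bnd_target[OF Schain_gain[of l mu N], of "mu+1"] l by auto
    ultimately show ?thesis by (rule bnd_comp)
  qed
  have s: "bnd (mu+1) (mu+1) (\<lambda>v j. \<Sum>l\<in>{1..<N}. Schain l N (Mop l (a l) (Dop l v)) j)"
    by (rule bnd_sum) (use t in auto)
  have z: "bnd (mu+1) (mu+1) (\<lambda>v. Schain 0 N (Mop 0 (a 0) v))"
    using bnd_comp[OF _ Schain_bnd, where mu = "mu+1" and T = "Mop 0 (a 0)" and nu = "mu+1"] Mb N by auto
  have "low N a = (\<lambda>v j. (\<Sum>l\<in>{1..<N}. Schain l N (Mop l (a l) (Dop l v)) j) + Schain 0 N (Mop 0 (a 0) v) j)"
    by (auto simp: fun_eq_iff low_def)
  thus ?thesis using bnd_add[OF s z] by simp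
qed

lemma KK_bnd:
  assumes Mb: "\<forall>l<N. \<forall>mu. bnd mu mu (Mop l (a l))" and N: "N \<ge> 1"
    and CB: "\<forall>v\<in>l2 D. \<forall>i<N. cmod (Bapp b v i) \<le> CB * l2norm D v" and D: "D \<le> mu + 1"
  shows "bnd (mu+1) (mu+1) (KK N b a)"
proof -
  have "KK N b a = (\<lambda>v i. (if i < N then Bapp b v i - v i else 0) + (if i < N then 0 else low N a v (i - N)))"
    by (auto simp: fun_eq_iff KK_def)
  thus ?thesis using bnd_add[OF fin_bnd[OF CB D] rshift_bnd[OF low_bnd[OF Mb N]]] by simp
qed

lemma Dop_lin: "Dop l (\<lambda>k. x * u k + y * v k) = (\<lambda>j. x * Dop l u j + y * Dop l v j)"
  by (simp add: fun_eq_iff Dop_def algebra_simps)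

lemma Sop_lin: "Sop l (\<lambda>k. x * u k + y * v k) = (\<lambda>j. x * Sop l u j + y * Sop l v j)"
  by (simp add: fun_eq_iff Sop_def algebra_simps diff_divide_distrib add_divide_distrib)

lemma Schain_lin: "Schain lo hi (\<lambda>k. x * u k + y * v k) = (\<lambda>j. x * Schain lo hi u j + y * Schain lo hi v j)"
  by (induction hi) (auto simp: Sop_lin)

lemma sum_lin:
  fixes m u v :: "nat \<Rightarrow> complex" and x y :: complex
  assumes "summable (\<lambda>k. m k * u k)" "summable (\<lambda>k. m k * v k)"
  shows "(\<Sum>k. m k * (x * u k + y * v k)) = x * (\<Sum>k. m k * u k) + y * (\<Sum>k. m k * v k)"
proof -
  have s1: "summable (\<lambda>k. x * (m k * u k))" using assms(1) by (rule summable_mult)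
  have s2: "summable (\<lambda>k. y * (m k * v k))" using assms(2) by (rule summable_mult)
  have "(\<Sum>k. m k * (x * u k + y * v k)) = (\<Sum>k. x * (m k * u k) + y * (m k * v k))"
    by (simp add: algebra_simps)
  also have "\<dots> = (\<Sum>k. x * (m k * u k)) + (\<Sum>k. y * (m k * v k))" by (rule suminf_add[OF s1 s2, symmetric])
  also have "\<dots> = x * (\<Sum>k. m k * u k) + y * (\<Sum>k. m k * v k)"
    using suminf_mult[of "\<lambda>k. m k * u k" x] suminf_mult[of "\<lambda>k. m k * v k" y] assms by simp
  finally show ?thesis .
qed

lemma low_lin:
  assumes Ms: "\<forall>l<N. \<forall>mu. \<forall>v\<in>l2 mu. \<forall>j. summable (\<lambda>k. Mmat l (a l) j k * v k)"
    and u: "u \<in> l2 (mu+1)" and v: "v \<in> l2 (mu+1)" and N: "N \<ge> 1"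
  shows "low N a (\<lambda>k. x * u k + y * v k) = (\<lambda>j. x * low N a u j + y * low N a v j)"
proof -
  have Mlin: "Mop l (a l) (\<lambda>k. x * p k + y * q k) = (\<lambda>j. x * Mop l (a l) p j + y * Mop l (a l) q j)"
    if "l < N" "p \<in> l2 nu" "q \<in> l2 nu" for l p q nu
    unfolding Mop_def using Ms that by (auto simp: fun_eq_iff intro!: sum_lin)
  have Dl: "Dop l w \<in> l2 mu" if "w \<in> l2 (mu+1)" for l w
    using Dop_bnd[of mu l] that unfolding bnd_def by blast
  have t: "Schain l N (Mop l (a l) (Dop l (\<lambda>k. x * u k + y * v k))) j
      = x * Schain l N (Mop l (a l) (Dop l u)) j + y * Schain l N (Mop l (a l) (Dop l v)) j"
    if l: "l \<in> {1..<N}" for l j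
    using l Mlin[OF _ Dl[OF u] Dl[OF v], of l] by (simp add: Dop_lin Schain_lin)
  have t0: "Schain 0 N (Mop 0 (a 0) (\<lambda>k. x * u k + y * v k)) j
      = x * Schain 0 N (Mop 0 (a 0) u) j + y * Schain 0 N (Mop 0 (a 0) v) j" for j
    using N Mlin[OF _ u v, of 0] by (simp add: Schain_lin)
  have ts: "(\<Sum>l\<in>{1..<N}. Schain l N (Mop l (a l) (Dop l (\<lambda>k. x * u k + y * v k))) j)
     = x * (\<Sum>l\<in>{1..<N}. Schain l N (Mop l (a l) (Dop l u)) j) + y * (\<Sum>l\<in>{1..<N}. Schain l N (Mop l (a l) (Dop l v)) j)" for j
    unfolding sum_distrib_left sum.distrib[symmetric] by (rule sum.cong) (auto simp: t)
  show ?thesis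
  proof (rule ext)
    fix j show "low N a (\<lambda>k. x * u k + y * v k) j = x * low N a u j + y * low N a v j"
      unfolding low_def ts t0 by (simp add: algebra_simps)
  qed
qed

lemma KK_lin:
  assumes Ms: "\<forall>l<N. \<forall>mu. \<forall>v\<in>l2 mu. \<forall>j. summable (\<lambda>k. Mmat l (a l) j k * v k)"
    and Bs: "\<forall>v\<in>l2 D. \<forall>i<N. summable (\<lambda>k. b i k * v k)" and D: "D \<le> mu + 1"
    and u: "u \<in> l2 (mu+1)" and v: "v \<in> l2 (mu+1)" and N: "N \<ge> 1"
  shows "KK N b a (\<lambda>k. x * u k + y * v k) = (\<lambda>i. x * KK N b a u i + y * KK N b a v i)"
proof (rule ext)
  fix i
  have uD: "u \<in> l2 D" and vD: "v \<in> l2 D" using l2_mono[OF u D] l2_mono[OF v D] by auto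
  show "KK N b a (\<lambda>k. x * u k + y * v k) i = x * KK N b a u i + y * KK N b a v i"
  proof (cases "i < N")
    case True
    have "Bapp b (\<lambda>k. x * u k + y * v k) i = x * Bapp b u i + y * Bapp b v i"
      unfolding Bapp_def by (rule sum_lin) (use Bs uD vD True in auto)
    thus ?thesis using True by (simp add: KK_def algebra_simps)
  next
    case False thus ?thesis using low_lin[OF Ms u v N, of x y] by (simp add: KK_def fun_eq_iff)
  qed
qed

definition cN :: "nat \<Rightarrow> real" where "cN N = 2 ^ (N - 1) * fact (N - 1)"

lemma cN_ge1: "cN N \<ge> 1"
proof -
  have "(1::real) \<le> 2 ^ (N - 1)" by simp
  moreover have "(1::real) \<le> fact (N - 1)" by simp
  ultimately show ?thesis unfolding cN_def using mult_mono[of 1 "2 ^ (N - 1)" 1 "fact (N - 1) :: real"] by simp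
qed

lemma dd_norm: "cmod (dd N i) = (if i < N then 1 else cN N * real i)"
proof (cases "i < N")
  case True thus ?thesis by (simp add: dd_def)
next
  case False
  hence e: "dd N i = of_real (cN N * real i)" by (simp add: dd_def cN_def)
  have "cmod (dd N i) = \<bar>cN N * real i\<bar>" by (simp only: e norm_of_real)
  thus ?thesis using False cN_ge1[of N] by simp
qed

lemma dd_up: "(cmod (dd N i))\<^sup>2 \<le> (cN N)\<^sup>2 * (real i + 1)\<^sup>2"
proof (cases "i < N")
  case True
  have "1 \<le> cN N * (real i + 1)" using cN_ge1[of N] mult_mono[of 1 "cN N" 1 "real i + 1"] by simp
  hence "1 \<le> (cN N * (real i + 1))\<^sup>2" by (simp add: one_le_power)
  thus ?thesis using True by (simp add: dd_norm power_mult_distrib)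
next
  case False
  have "cN N * real i \<le> cN N * (real i + 1)" using cN_ge1[of N] by simp
  hence "(cN N * real i)\<^sup>2 \<le> (cN N * (real i + 1))\<^sup>2" using cN_ge1[of N] by (intro power_mono) auto
  thus ?thesis using False by (simp add: dd_norm power_mult_distrib)
qed

lemma dd_low: assumes N: "N \<ge> 1" shows "(real i + 1)\<^sup>2 \<le> 4 * (real N)\<^sup>2 * (cmod (dd N i))\<^sup>2"
proof (cases "i < N")
  case True
  have "(real i + 1)\<^sup>2 \<le> (real N)\<^sup>2" using True by (intro power_mono) auto
  also have "\<dots> \<le> 4 * (real N)\<^sup>2" by simp
  finally show ?thesis using True by (simp add: dd_norm)
next
  case False
  hence i1: "real i \<ge> 1" using N by simp
  have "real i + 1 \<le> 2 * real N * (cN N * real i)"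
  proof -
    have "real i + 1 \<le> 2 * real i" using i1 by simp
    also have "\<dots> \<le> 2 * (real N * cN N) * real i"
    proof -
      have "1 \<le> real N * cN N" using N cN_ge1[of N] mult_mono[of 1 "real N" 1 "cN N"] by simp
      thus ?thesis using i1 by (simp add: mult_right_mono)
    qed
    finally show ?thesis by (simp add: algebra_simps)
  qed
  hence "(real i + 1)\<^sup>2 \<le> (2 * real N * (cN N * real i))\<^sup>2" by (intro power_mono) auto
  thus ?thesis using False by (simp add: dd_norm power_mult_distrib)
qed

lemma dd_nz: "N \<ge> 1 \<Longrightarrow> dd N i \<noteq> 0"
proof -
  assume N: "N \<ge> 1"
  have "cmod (dd N i) > 0" using N cN_ge1[of N] by (auto simp: dd_norm)
  thus ?thesis by auto
qed

lemma sandwich0: "(\<And>i. 0 \<le> s i) \<Longrightarrow> (\<And>i. s i \<le> t i) \<Longrightarrow> t \<longlonglongrightarrow> 0 \<Longrightarrow> s \<longlonglongrightarrow> (0::real)"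
  by (rule tendsto_sandwich[of "\<lambda>_. 0" s sequentially t 0]) auto

lemma comp_ge: assumes X: "X \<longlonglongrightarrow> (0::real)" and g: "\<And>i. g i \<ge> i" shows "(\<lambda>i. X (g i)) \<longlonglongrightarrow> 0"
proof (rule LIMSEQ_I)
  fix r :: real assume "0 < r"
  then obtain no where "\<forall>n\<ge>no. norm (X n - 0) < r" using LIMSEQ_D[OF X] by blast
  hence "\<forall>n\<ge>no. norm (X (g n) - 0) < r" using g le_trans by blast
  thus "\<exists>no. \<forall>n\<ge>no. norm (X (g n) - 0) < r" by blast
qed



lemma stability:
  fixes A K :: "seq \<Rightarrow> seq" and mu :: real
  assumes N: "N \<ge> 1"
    and split: "\<And>v i. A v i = dd N i * v i + K v i"
    and Kb: "bnd (mu+1) (mu+1) K"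
    and Ab: "bnd (mu+1) mu A"
    and Klin: "\<And>u v x y. u \<in> l2 (mu+1) \<Longrightarrow> v \<in> l2 (mu+1) \<Longrightarrow> K (\<lambda>k. x * u k + y * v k) = (\<lambda>i. x * K u i + y * K v i)"
    and inj: "inj_on A (l2 (mu+1))"
  shows "\<exists>c\<ge>0. \<exists>n0. \<forall>n\<ge>n0. \<forall>w. (\<forall>k\<ge>n. w k = 0) \<longrightarrow> sq (mu+1) w \<le> c * sq mu (trunc n (A w))"
proof (rule ccontr)
  assume H: "\<not> ?thesis"
  have Alin: "A (\<lambda>k. x * u k + y * v k) = (\<lambda>i. x * A u i + y * A v i)"
    if "u \<in> l2 (mu+1)" "v \<in> l2 (mu+1)" for u v x y
  proof (rule ext)
    fix i
    have "K (\<lambda>k. x * u k + y * v k) i = x * K u i + y * K v i" using Klin[OF that] by simp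
    thus "A (\<lambda>k. x * u k + y * v k) i = x * A u i + y * A v i" by (simp add: split algebra_simps)
  qed
  obtain CK where CK: "CK \<ge> 0" "\<forall>v\<in>l2 (mu+1). K v \<in> l2 (mu+1) \<and> sq (mu+1) (K v) \<le> CK * sq (mu+1) v"
    using Kb unfolding bnd_def by blast
  have Aw: "\<forall>v\<in>l2 (mu+1). A v \<in> l2 mu" using Ab unfolding bnd_def by blast
  have H': "\<forall>c\<ge>0. \<forall>n0. \<exists>n\<ge>n0. \<exists>w. (\<forall>k\<ge>n. w k = 0) \<and> \<not> sq (mu+1) w \<le> c * sq mu (trunc n (A w))"
    using H by blast
  have "\<forall>j. \<exists>n w. n \<ge> j \<and> (\<forall>k\<ge>n. w k = 0) \<and> (real j + 1) * sq mu (trunc n (A w)) < sq (mu+1) w"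
  proof
    fix j :: nat
    have "real j + 1 \<ge> 0" by simp
    from H'[rule_format, OF this, of j]
    show "\<exists>n w. n \<ge> j \<and> (\<forall>k\<ge>n. w k = 0) \<and> (real j + 1) * sq mu (trunc n (A w)) < sq (mu+1) w"
      by (auto simp: not_le)
  qed
  hence "\<exists>f. \<forall>j. \<exists>w. f j \<ge> j \<and> (\<forall>k\<ge>f j. w k = 0) \<and> (real j + 1) * sq mu (trunc (f j) (A w)) < sq (mu+1) w"
    by (rule choice)
  then obtain nn where "\<forall>j. \<exists>w. nn j \<ge> j \<and> (\<forall>k\<ge>nn j. w k = 0) \<and> (real j + 1) * sq mu (trunc (nn j) (A w)) < sq (mu+1) w"
    by blast
  hence "\<exists>g. \<forall>j. nn j \<ge> j \<and> (\<forall>k\<ge>nn j. g j k = 0) \<and> (real j + 1) * sq mu (trunc (nn j) (A (g j))) < sq (mu+1) (g j)"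
    by (rule choice)
  then obtain ww where PP: "\<forall>j. nn j \<ge> j \<and> (\<forall>k\<ge>nn j. ww j k = 0) \<and> (real j + 1) * sq mu (trunc (nn j) (A (ww j))) < sq (mu+1) (ww j)"
    by blast
  have P: "nn j \<ge> j \<and> (\<forall>k\<ge>nn j. ww j k = 0) \<and> (real j + 1) * sq mu (trunc (nn j) (A (ww j))) < sq (mu+1) (ww j)" for j
    using PP by blast
  have wl: "ww j \<in> l2 (mu+1)" for j using P[of j] fin_l2 by blast
  have tl: "trunc (nn j) (A (ww j)) \<in> l2 mu" for j using trunc_l2 Aw wl by blast
  have t0: "0 \<le> sq mu (trunc (nn j) (A (ww j)))" for j using sq_nn[OF tl] .
  have spos: "0 < sq (mu+1) (ww j)" for j
  proof -
    have "0 \<le> (real j + 1) * sq mu (trunc (nn j) (A (ww j)))" using t0[of j] by simp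
    thus ?thesis using P[of j] by linarith
  qed
  define cc where "cc j = complex_of_real (1 / sqrt (sq (mu+1) (ww j)))" for j
  define v where "v j = (\<lambda>k. cc j * ww j k)" for j
  have cc2: "(cmod (cc j))\<^sup>2 = 1 / sq (mu+1) (ww j)" for j
    using spos[of j] unfolding cc_def norm_of_real power2_abs by (simp add: power_divide)
  have vl: "v j \<in> l2 (mu+1)" and v1: "sq (mu+1) (v j) = 1" for j
    using scale_l2[OF wl[of j], of "cc j"] cc2[of j] spos[of j] unfolding v_def by auto
  have vsupp: "\<forall>k\<ge>nn j. v j k = 0" for j using P[of j] unfolding v_def by auto
  have Av: "A (v j) = (\<lambda>i. cc j * A (ww j) i)" for j
  proof -
    have "A (\<lambda>k. cc j * ww j k + 0 * ww j k) = (\<lambda>i. cc j * A (ww j) i + 0 * A (ww j) i)"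
      by (rule Alin[OF wl wl])
    thus ?thesis unfolding v_def by simp
  qed
  have tv: "sq mu (trunc (nn j) (A (v j))) \<le> 1 / (real j + 1)" for j
  proof -
    have e: "trunc (nn j) (A (v j)) = (\<lambda>k. cc j * trunc (nn j) (A (ww j)) k)"
      by (auto simp: fun_eq_iff trunc_def Av)
    have "sq mu (trunc (nn j) (A (v j))) = sq mu (trunc (nn j) (A (ww j))) / sq (mu+1) (ww j)"
      unfolding e using scale_l2[OF tl[of j], of "cc j"] cc2[of j] by simp
    also have "\<dots> \<le> 1 / (real j + 1)"
      using P[of j] spos[of j] by (simp add: field_simps)
    finally show ?thesis .
  qed
  have Kvl: "K (v j) \<in> l2 (mu+1)" and KvM: "sq (mu+1) (K (v j)) \<le> CK" for j
    using CK vl[of j] v1[of j] by auto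
  obtain r yl where r: "strict_mono r" and yl: "yl \<in> l2 (mu+1)"
    and conv: "(\<lambda>i. sq mu (\<lambda>k. K (v (r i)) k - yl k)) \<longlonglongrightarrow> 0"
    using compact_emb[of "\<lambda>j. K (v j)" mu CK] Kvl KvM by blast
  have yl0: "yl \<in> l2 mu" using l2_mono[OF yl, of mu] by simp
  have Kvl0: "K (v j) \<in> l2 mu" for j using l2_mono[OF Kvl[of j], of mu] by simp
  define m where "m i = nn (r i)" for i
  have mi: "m i \<ge> i" for i using P[of "r i"] seq_suble[OF r, of i] unfolding m_def by linarith
  define E where "E i = (\<lambda>k. dd N k * v (r i) k + yl k)" for i
  define a1 where "a1 i = trunc (m i) (A (v (r i)))" for i
  define a2 where "a2 i = trunc (m i) (\<lambda>k. yl k - K (v (r i)) k)" for i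
  define a3 where "a3 i = (\<lambda>k. yl k - trunc (m i) yl k)" for i
  have Edec: "E i = (\<lambda>k. a1 i k + (a2 i k + a3 i k))" for i
  proof (rule ext)
    fix k
    show "E i k = a1 i k + (a2 i k + a3 i k)"
    proof (cases "k < m i")
      case True thus ?thesis by (simp add: E_def a1_def a2_def a3_def trunc_def split)
    next
      case False hence "v (r i) k = 0" using vsupp[of "r i"] unfolding m_def by auto
      thus ?thesis using False by (simp add: E_def a1_def a2_def a3_def trunc_def)
    qed
  qed
  have a1l: "a1 i \<in> l2 mu" for i unfolding a1_def using trunc_l2 Aw vl by blast
  have d2: "(\<lambda>k. yl k - K (v (r i)) k) \<in> l2 mu" and d2s: "sq mu (\<lambda>k. yl k - K (v (r i)) k) = sq mu (\<lambda>k. K (v (r i)) k - yl k)" for i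
  proof -
    have dd1: "(\<lambda>k. K (v (r i)) k - yl k) \<in> l2 mu" using diff_l2[OF Kvl0 yl0] by simp
    have "(\<lambda>k. - (K (v (r i)) k - yl k)) = (\<lambda>k. yl k - K (v (r i)) k)" by auto
    thus "(\<lambda>k. yl k - K (v (r i)) k) \<in> l2 mu" "sq mu (\<lambda>k. yl k - K (v (r i)) k) = sq mu (\<lambda>k. K (v (r i)) k - yl k)"
      using neg_l2[OF dd1] by auto
  qed
  have a2l: "a2 i \<in> l2 mu" and a2s: "sq mu (a2 i) \<le> sq mu (\<lambda>k. K (v (r i)) k - yl k)" for i
    unfolding a2_def using trunc_l2[OF d2[of i], of "m i"] d2s[of i] by auto
  have a3l: "a3 i \<in> l2 mu" for i unfolding a3_def using diff_l2[OF yl0 trunc_l2[OF yl0, THEN conjunct1]] by simp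
  have El: "E i \<in> l2 mu" and Ele: "sq mu (E i) \<le> 2 * (1 / (real i + 1)) + 4 * sq mu (\<lambda>k. K (v (r i)) k - yl k) + 4 * sq mu (a3 i)" for i
  proof -
    have s23: "(\<lambda>k. a2 i k + a3 i k) \<in> l2 mu" "sq mu (\<lambda>k. a2 i k + a3 i k) \<le> 2 * sq mu (a2 i) + 2 * sq mu (a3 i)"
      using add_l2[OF a2l a3l] by auto
    have s123: "E i \<in> l2 mu" "sq mu (E i) \<le> 2 * sq mu (a1 i) + 2 * sq mu (\<lambda>k. a2 i k + a3 i k)"
      using add_l2[OF a1l s23(1)] unfolding Edec[of i] by auto
    show "E i \<in> l2 mu" by (rule s123(1))
    have "sq mu (a1 i) \<le> 1 / (real (r i) + 1)" unfolding a1_def m_def by (rule tv)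
    also have "\<dots> \<le> 1 / (real i + 1)" using seq_suble[OF r, of i] by (simp add: frac_le)
    finally have "sq mu (a1 i) \<le> 1 / (real i + 1)" .
    thus "sq mu (E i) \<le> 2 * (1 / (real i + 1)) + 4 * sq mu (\<lambda>k. K (v (r i)) k - yl k) + 4 * sq mu (a3 i)"
      using s123(2) s23(2) a2s[of i] by linarith
  qed
  have a3t: "(\<lambda>i. sq mu (a3 i)) \<longlonglongrightarrow> 0"
    unfolding a3_def using comp_ge[OF tail_l2[OF yl0] mi] .
  have inv0: "(\<lambda>i. 1 / (real i + 1)) \<longlonglongrightarrow> 0"
    using LIMSEQ_inverse_real_of_nat by (simp add: inverse_eq_divide add.commute)
  have Et: "(\<lambda>i. sq mu (E i)) \<longlonglongrightarrow> 0"
  proof (rule sandwich0)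
    show "0 \<le> sq mu (E i)" for i using sq_nn[OF El] .
    show "sq mu (E i) \<le> 2 * (1 / (real i + 1)) + 4 * sq mu (\<lambda>k. K (v (r i)) k - yl k) + 4 * sq mu (a3 i)" for i by (rule Ele)
    show "(\<lambda>i. 2 * (1 / (real i + 1)) + 4 * sq mu (\<lambda>k. K (v (r i)) k - yl k) + 4 * sq mu (a3 i)) \<longlonglongrightarrow> 0"
      using tendsto_add[OF tendsto_add[OF tendsto_mult_right_zero[OF inv0, of 2] tendsto_mult_right_zero[OF conv, of 4]] tendsto_mult_right_zero[OF a3t, of 4]]
      by simp
  qed
  define z where "z = (\<lambda>k. - yl k / dd N k)"
  have dnz: "dd N k \<noteq> 0" for k using dd_nz[OF N] .
  have vz: "(\<lambda>k. v (r i) k - z k) \<in> l2 (mu+1) \<and> sq (mu+1) (\<lambda>k. v (r i) k - z k) \<le> 4 * (real N)\<^sup>2 * sq mu (E i)" for i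
  proof (rule dom0[OF El])
    show "0 \<le> 4 * (real N)\<^sup>2" by simp
    fix k
    have e: "v (r i) k - z k = E i k / dd N k" using dnz[of k] by (simp add: z_def E_def field_simps)
    have eq: "(cmod (v (r i) k - z k))\<^sup>2 * W (mu+1) k = (cmod (E i k))\<^sup>2 * W mu k * ((real k + 1)\<^sup>2 / (cmod (dd N k))\<^sup>2)"
      unfolding e W_suc by (simp add: norm_divide power_divide)
    have le: "(real k + 1)\<^sup>2 / (cmod (dd N k))\<^sup>2 \<le> 4 * (real N)\<^sup>2"
      using dd_low[OF N, of k] dnz[of k] by (simp add: divide_le_eq)
    have "(cmod (E i k))\<^sup>2 * W mu k * ((real k + 1)\<^sup>2 / (cmod (dd N k))\<^sup>2) \<le> (cmod (E i k))\<^sup>2 * W mu k * (4 * (real N)\<^sup>2)"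
      by (rule mult_left_mono[OF le term_nn])
    thus "(cmod (v (r i) k - z k))\<^sup>2 * W (mu+1) k \<le> 4 * (real N)\<^sup>2 * ((cmod (E i k))\<^sup>2 * W mu k)"
      unfolding eq by (simp only: mult.commute[of "4 * (real N)\<^sup>2"])
  qed
  have vzt: "(\<lambda>i. sq (mu+1) (\<lambda>k. v (r i) k - z k)) \<longlonglongrightarrow> 0"
  proof (rule sandwich0)
    show "0 \<le> sq (mu+1) (\<lambda>k. v (r i) k - z k)" for i using sq_nn vz by blast
    show "sq (mu+1) (\<lambda>k. v (r i) k - z k) \<le> 4 * (real N)\<^sup>2 * sq mu (E i)" for i using vz by blast
    show "(\<lambda>i. 4 * (real N)\<^sup>2 * sq mu (E i)) \<longlonglongrightarrow> 0" using tendsto_mult_right_zero[OF Et] by simp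
  qed
  have zl: "z \<in> l2 (mu+1)"
  proof -
    have "(\<lambda>k. v (r 0) k - (v (r 0) k - z k)) \<in> l2 (mu+1)" using diff_l2[OF vl vz[THEN conjunct1]] by blast
    thus ?thesis by simp
  qed
  have KvKz: "(\<lambda>i. sq mu (\<lambda>k. K (v (r i)) k - K z k)) \<longlonglongrightarrow> 0"
  proof (rule sandwich0)
    fix i
    have e: "K (\<lambda>k. 1 * v (r i) k + (-1) * z k) = (\<lambda>k. 1 * K (v (r i)) k + (-1) * K z k)" by (rule Klin[OF vl zl])
    hence e': "K (\<lambda>k. v (r i) k - z k) = (\<lambda>k. K (v (r i)) k - K z k)" by simp
    have b: "K (\<lambda>k. v (r i) k - z k) \<in> l2 (mu+1) \<and> sq (mu+1) (K (\<lambda>k. v (r i) k - z k)) \<le> CK * sq (mu+1) (\<lambda>k. v (r i) k - z k)"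
      using CK vz[of i] by blast
    hence b1: "(\<lambda>k. K (v (r i)) k - K z k) \<in> l2 (mu+1)"
      and b2: "sq (mu+1) (\<lambda>k. K (v (r i)) k - K z k) \<le> CK * sq (mu+1) (\<lambda>k. v (r i) k - z k)"
      unfolding e' by auto
    have b3: "(\<lambda>k. K (v (r i)) k - K z k) \<in> l2 mu \<and> sq mu (\<lambda>k. K (v (r i)) k - K z k) \<le> sq (mu+1) (\<lambda>k. K (v (r i)) k - K z k)"
      by (rule l2_mono[OF b1]) simp
    show "0 \<le> sq mu (\<lambda>k. K (v (r i)) k - K z k)" using sq_nn b3 by blast
    show "sq mu (\<lambda>k. K (v (r i)) k - K z k) \<le> CK * sq (mu+1) (\<lambda>k. v (r i) k - z k)"
      using b2 b3 by linarith
  next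
    show "(\<lambda>i. CK * sq (mu+1) (\<lambda>k. v (r i) k - z k)) \<longlonglongrightarrow> 0" using tendsto_mult_right_zero[OF vzt] by simp
  qed
  have Kzl1: "K z \<in> l2 (mu+1)" using CK zl by blast
  have Kzl: "K z \<in> l2 mu" using l2_mono[OF Kzl1, of mu] by simp
  have Kzy: "sq mu (\<lambda>k. K z k - yl k) \<le> 2 * sq mu (\<lambda>k. K (v (r i)) k - K z k) + 2 * sq mu (\<lambda>k. K (v (r i)) k - yl k)" for i
  proof -
    have m1: "(\<lambda>k. K (v (r i)) k - K z k) \<in> l2 mu" using diff_l2[OF Kvl0 Kzl] by simp
    have m2: "(\<lambda>k. K (v (r i)) k - yl k) \<in> l2 mu" using diff_l2[OF Kvl0 yl0] by simp
    have m1': "(\<lambda>k. - (K (v (r i)) k - K z k)) \<in> l2 mu" "sq mu (\<lambda>k. - (K (v (r i)) k - K z k)) = sq mu (\<lambda>k. K (v (r i)) k - K z k)"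
      using neg_l2[OF m1] by auto
    have "sq mu (\<lambda>k. - (K (v (r i)) k - K z k) + (K (v (r i)) k - yl k)) \<le> 2 * sq mu (\<lambda>k. - (K (v (r i)) k - K z k)) + 2 * sq mu (\<lambda>k. K (v (r i)) k - yl k)"
      using add_l2[OF m1'(1) m2] by simp
    thus ?thesis using m1'(2) by simp
  qed
  have "sq mu (\<lambda>k. K z k - yl k) \<le> 0"
  proof (rule LIMSEQ_le_const)
    show "(\<lambda>i. 2 * sq mu (\<lambda>k. K (v (r i)) k - K z k) + 2 * sq mu (\<lambda>k. K (v (r i)) k - yl k)) \<longlonglongrightarrow> 0"
      using tendsto_add[OF tendsto_mult_right_zero[OF KvKz, of 2] tendsto_mult_right_zero[OF conv, of 2]] by simp
    show "\<exists>N. \<forall>n\<ge>N. sq mu (\<lambda>k. K z k - yl k) \<le> 2 * sq mu (\<lambda>k. K (v (r n)) k - K z k) + 2 * sq mu (\<lambda>k. K (v (r n)) k - yl k)"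
      using Kzy by blast
  qed
  moreover have Kzyl: "(\<lambda>k. K z k - yl k) \<in> l2 mu" using diff_l2[OF Kzl yl0] by simp
  ultimately have "sq mu (\<lambda>k. K z k - yl k) = 0" using sq_nn by (meson antisym)
  hence "(\<lambda>k. K z k - yl k) = (\<lambda>k. 0)" using sq_zero_iff[OF Kzyl] by simp
  hence Kz: "K z k = yl k" for k by (metis right_minus_eq)
  have Az: "A z = (\<lambda>k. 0)"
  proof (rule ext)
    fix k
    have "dd N k * z k = - yl k" using dnz[of k] by (simp add: z_def)
    thus "A z k = 0" by (simp add: split Kz)
  qed
  have A0: "A (\<lambda>k. 0) = (\<lambda>k. 0)"
  proof -
    have "A (\<lambda>k. 0 * z k + 0 * z k) = (\<lambda>i. 0 * A z i + 0 * A z i)" by (rule Alin[OF zl zl])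
    thus ?thesis by simp
  qed
  have z0l: "(\<lambda>k. 0::complex) \<in> l2 (mu+1)" by (rule fin_l2[of 0]) simp
  have "z = (\<lambda>k. 0)" by (rule inj_onD[OF inj _ zl z0l]) (simp add: Az A0)
  hence "sq (mu+1) (\<lambda>k. v (r i) k - z k) = 1" for i using v1 by simp
  hence "(\<lambda>i::nat. 1::real) \<longlonglongrightarrow> 0" using vzt by simp
  thus False by (simp add: LIMSEQ_const_iff)
qed



theorem theorem4p5:
  fixes N :: nat and a :: "nat \<Rightarrow> real \<Rightarrow> complex" and b :: "nat \<Rightarrow> nat \<Rightarrow> complex"
    and D lam :: int and c :: "nat \<Rightarrow> complex" and f u :: seq
  assumes N1: "N \<ge> 1"
    and a_cont: "\<forall>l<N. continuous_on {-1..1} (a l)"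
    and M_bdd: "\<forall>l<N. \<forall>mu::real. \<exists>C. \<forall>v\<in>l2 mu.
                  (\<forall>j. summable (\<lambda>k. Mmat l (a l) j k * v k))
                  \<and> Mop l (a l) v \<in> l2 mu \<and> l2norm mu (Mop l (a l) v) \<le> C * l2norm mu v"
    and B_bdd: "\<exists>C. \<forall>v\<in>l2 (real_of_int D). \<forall>i<N.
                  summable (\<lambda>k. b i k * v k) \<and> cmod (Bapp b v i) \<le> C * l2norm (real_of_int D) v"
    and lam: "lam \<ge> D - 1"
    and f: "f \<in> l2 (real_of_int lam - real N + 1)"
    and inv: "bij_betw (BL N b a) (l2 (real_of_int lam + 1)) (l2 (real_of_int lam))"
    and u: "u \<in> l2 (real_of_int lam + 1)"
    and sol: "BL N b a u = (\<lambda>k. if k < N then c k else Schain 0 N f (k - N))"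
  shows "(\<exists>C. \<exists>n0. \<forall>n\<ge>n0.
            (\<forall>v. (\<forall>k\<ge>n. v k = 0) \<longrightarrow> (\<forall>i<n. BL N b a v i = 0) \<longrightarrow> v = (\<lambda>k. 0))
          \<and> (\<forall>w. (\<forall>k\<ge>n. w k = 0)
                 \<longrightarrow> (\<forall>i<n. BL N b a w i = (if i < N then c i else Schain 0 N f (i - N)))
                 \<longrightarrow> l2norm (real_of_int lam + 1) (\<lambda>k. u k - w k)
                     \<le> C * l2norm (real_of_int lam + 1) (\<lambda>k. u k - trunc n u k)))
        \<and> (\<lambda>n. l2norm (real_of_int lam + 1) (\<lambda>k. u k - trunc n u k)) \<longlonglongrightarrow> 0"
proof -
  define m0 where "m0 = real_of_int lam"
  have Mb: "\<forall>l<N. \<forall>mu. bnd mu mu (Mop l (a l))"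
  proof (intro allI impI)
    fix l mu assume l: "l < N"
    obtain C where C: "\<forall>v\<in>l2 mu. (\<forall>j. summable (\<lambda>k. Mmat l (a l) j k * v k))
                  \<and> Mop l (a l) v \<in> l2 mu \<and> l2norm mu (Mop l (a l) v) \<le> C * l2norm mu v"
      using M_bdd[rule_format, OF l, of mu] by (elim exE) (rule that)
    show "bnd mu mu (Mop l (a l))" unfolding bnd_def
    proof (intro exI[of _ "C^2"] conjI ballI)
      show "0 \<le> C^2" by simp
      fix v assume v: "v \<in> l2 mu"
      have Cv: "Mop l (a l) v \<in> l2 mu \<and> l2norm mu (Mop l (a l) v) \<le> C * l2norm mu v"
        using C[rule_format, OF v] by (elim conjE) (rule conjI)
      have Mv: "Mop l (a l) v \<in> l2 mu" using Cv by (rule conjunct1)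
      have le: "sqrt (sq mu (Mop l (a l) v)) \<le> C * sqrt (sq mu v)"
        using Cv unfolding l2norm_sq by (rule conjunct2)
      show "Mop l (a l) v \<in> l2 mu" by (rule Mv)
      have "sq mu (Mop l (a l) v) = (sqrt (sq mu (Mop l (a l) v)))\<^sup>2" using sq_nn[OF Mv] by simp
      also have "\<dots> \<le> (C * sqrt (sq mu v))\<^sup>2" by (rule power_mono[OF le]) (simp add: sq_nn[OF Mv])
      also have "\<dots> = C^2 * sq mu v" using sq_nn[OF v] by (simp add: power_mult_distrib)
      finally show "sq mu (Mop l (a l) v) \<le> C^2 * sq mu v" .
    qed
  qed
  have Ms: "\<forall>l<N. \<forall>mu. \<forall>v\<in>l2 mu. \<forall>j. summable (\<lambda>k. Mmat l (a l) j k * v k)"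
    using M_bdd by blast
  obtain CB where CB: "\<forall>v\<in>l2 (real_of_int D). \<forall>i<N. summable (\<lambda>k. b i k * v k) \<and> cmod (Bapp b v i) \<le> CB * l2norm (real_of_int D) v"
    using B_bdd by blast
  have CB1: "\<forall>v\<in>l2 (real_of_int D). \<forall>i<N. cmod (Bapp b v i) \<le> CB * l2norm (real_of_int D) v" using CB by blast
  have Bs: "\<forall>v\<in>l2 (real_of_int D). \<forall>i<N. summable (\<lambda>k. b i k * v k)" using CB by blast
  have Dle: "real_of_int D \<le> m0 + 1" using lam unfolding m0_def by simp
  have Kb: "bnd (m0 + 1) (m0 + 1) (KK N b a)" by (rule KK_bnd[OF Mb N1 CB1 Dle])
  have Klin: "KK N b a (\<lambda>k. x * p k + y * q k) = (\<lambda>i. x * KK N b a p i + y * KK N b a q i)"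
    if "p \<in> l2 (m0+1)" "q \<in> l2 (m0+1)" for p q x y
    by (rule KK_lin[OF Ms Bs Dle that N1])
  have split: "BL N b a v i = dd N i * v i + KK N b a v i" for v i by (rule BL_split)
  have Ab: "bnd (m0 + 1) m0 (BL N b a)"
  proof -
    have d: "bnd (m0+1) m0 (\<lambda>v i. dd N i * v (i+0))"
    proof (rule bnd_mult_shift[where C = "(cN N)^2"])
      fix j
      have "(cmod (dd N j))\<^sup>2 * W m0 j \<le> ((cN N)\<^sup>2 * (real j + 1)\<^sup>2) * W m0 j"
        by (rule mult_right_mono[OF dd_up]) (simp add: W_pos less_imp_le)
      thus "(cmod (dd N j))\<^sup>2 * W m0 j \<le> (cN N)\<^sup>2 * W (m0+1) (j+0)" unfolding W_suc by (simp add: algebra_simps)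
    qed simp
    have k: "bnd (m0+1) m0 (KK N b a)" by (rule bnd_target[OF Kb]) simp
    have "BL N b a = (\<lambda>v i. dd N i * v (i+0) + KK N b a v i)" by (simp add: fun_eq_iff split)
    thus ?thesis using bnd_add[OF d k] by simp
  qed
  have inj: "inj_on (BL N b a) (l2 (m0 + 1))" using inv unfolding m0_def by (rule bij_betw_imp_inj_on)
  obtain cs n0 where cs: "cs \<ge> 0" and stab: "\<forall>n\<ge>n0. \<forall>w. (\<forall>k\<ge>n. w k = 0) \<longrightarrow> sq (m0+1) w \<le> cs * sq m0 (trunc n (BL N b a w))"
    using stability[OF N1 split Kb Ab Klin inj] by blast
  obtain be where be: "be \<ge> 0" "\<forall>v\<in>l2 (m0+1). BL N b a v \<in> l2 m0 \<and> sq m0 (BL N b a v) \<le> be * sq (m0+1) v"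
    using Ab[unfolded bnd_def] by auto
  have BLlin: "BL N b a (\<lambda>k. x * p k + y * q k) = (\<lambda>i. x * BL N b a p i + y * BL N b a q i)"
    if "p \<in> l2 (m0+1)" "q \<in> l2 (m0+1)" for p q x y
  proof (rule ext)
    fix i
    have "KK N b a (\<lambda>k. x * p k + y * q k) i = x * KK N b a p i + y * KK N b a q i" using Klin[OF that] by simp
    thus "BL N b a (\<lambda>k. x * p k + y * q k) i = x * BL N b a p i + y * BL N b a q i" by (simp add: split algebra_simps)
  qed
  have um: "u \<in> l2 (m0+1)" using u unfolding m0_def .
  have z0: "(\<lambda>k. 0::complex) \<in> l2 m0" by (rule fin_l2[of 0]) simp
  have sq0: "sq m0 (\<lambda>k. 0) = 0" using sq_zero_iff[OF z0] by simp
  define CC where "CC = sqrt (2 + 2 * cs * be)"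
  have P1: "\<forall>v. (\<forall>k\<ge>n. v k = 0) \<longrightarrow> (\<forall>i<n. BL N b a v i = 0) \<longrightarrow> v = (\<lambda>k. 0)" if n: "n \<ge> n0" for n
  proof (intro allI impI)
    fix v assume vs: "\<forall>k\<ge>n. v k = 0" and ve: "\<forall>i<n. BL N b a v i = 0"
    have vl: "v \<in> l2 (m0+1)" by (rule fin_l2[OF vs])
    have "trunc n (BL N b a v) = (\<lambda>k. 0)" using ve by (auto simp: fun_eq_iff trunc_def)
    have "sq (m0+1) v \<le> cs * sq m0 (trunc n (BL N b a v))" using stab[THEN spec, of n, THEN mp, OF n, THEN spec, of v, THEN mp, OF vs] .
    hence "sq (m0+1) v \<le> 0" using \<open>trunc n (BL N b a v) = (\<lambda>k. 0)\<close> sq0 by simp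
    hence "sq (m0+1) v = 0" using sq_nn[OF vl] by linarith
    thus "v = (\<lambda>k. 0)" using sq_zero_iff[OF vl] by simp
  qed
  have P2: "\<forall>w. (\<forall>k\<ge>n. w k = 0)
                 \<longrightarrow> (\<forall>i<n. BL N b a w i = (if i < N then c i else Schain 0 N f (i - N)))
                 \<longrightarrow> l2norm (real_of_int lam + 1) (\<lambda>k. u k - w k)
                     \<le> CC * l2norm (real_of_int lam + 1) (\<lambda>k. u k - trunc n u k)" if n: "n \<ge> n0" for n
  proof (intro allI impI)
    fix w assume ws: "\<forall>k\<ge>n. w k = 0"
      and we: "\<forall>i<n. BL N b a w i = (if i < N then c i else Schain 0 N f (i - N))"
    have we': "BL N b a w i = BL N b a u i" if "i < n" for i using we that sol by simp
    have wl: "w \<in> l2 (m0+1)" by (rule fin_l2[OF ws])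
    have tul: "trunc n u \<in> l2 (m0+1)" using trunc_l2[OF um, of n] by (rule conjunct1)
    define e where "e = (\<lambda>k. trunc n u k - w k)"
    define d where "d = (\<lambda>k. u k - trunc n u k)"
    have es: "\<forall>k\<ge>n. e k = 0" unfolding e_def trunc_def using ws by auto
    have el: "e \<in> l2 (m0+1)" by (rule fin_l2[OF es])
    have dl: "d \<in> l2 (m0+1)" using diff_l2[OF um tul] unfolding d_def by (rule conjunct1)
    have md: "(\<lambda>k. trunc n u k - u k) \<in> l2 (m0+1)" and mds: "sq (m0+1) (\<lambda>k. trunc n u k - u k) = sq (m0+1) d"
    proof -
      have "(\<lambda>k. - d k) = (\<lambda>k. trunc n u k - u k)" by (auto simp: d_def)
      thus "(\<lambda>k. trunc n u k - u k) \<in> l2 (m0+1)" "sq (m0+1) (\<lambda>k. trunc n u k - u k) = sq (m0+1) d"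
        using neg_l2[OF dl] by auto
    qed
    have BLe: "BL N b a e = (\<lambda>i. BL N b a (trunc n u) i - BL N b a w i)"
    proof -
      have "BL N b a (\<lambda>k. 1 * trunc n u k + (-1) * w k) = (\<lambda>i. 1 * BL N b a (trunc n u) i + (-1) * BL N b a w i)"
        by (rule BLlin[OF tul wl])
      thus ?thesis by (simp add: e_def)
    qed
    have BLd: "BL N b a (\<lambda>k. trunc n u k - u k) = (\<lambda>i. BL N b a (trunc n u) i - BL N b a u i)"
    proof -
      have "BL N b a (\<lambda>k. 1 * trunc n u k + (-1) * u k) = (\<lambda>i. 1 * BL N b a (trunc n u) i + (-1) * BL N b a u i)"
        by (rule BLlin[OF tul um])
      thus ?thesis by simp
    qed
    have te: "trunc n (BL N b a e) = trunc n (BL N b a (\<lambda>k. trunc n u k - u k))"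
      unfolding BLe BLd using we' by (auto simp: fun_eq_iff trunc_def)
    have B1: "BL N b a (\<lambda>k. trunc n u k - u k) \<in> l2 m0" "sq m0 (BL N b a (\<lambda>k. trunc n u k - u k)) \<le> be * sq (m0+1) d"
      using be(2)[rule_format, OF md] mds by auto
    have "sq (m0+1) e \<le> cs * sq m0 (trunc n (BL N b a e))" using stab[THEN spec, of n, THEN mp, OF n, THEN spec, of e, THEN mp, OF es] .
    also have "sq m0 (trunc n (BL N b a e)) \<le> be * sq (m0+1) d"
      unfolding te using trunc_l2[OF B1(1), of n] B1(2) by linarith
    hence "cs * sq m0 (trunc n (BL N b a e)) \<le> cs * (be * sq (m0+1) d)" using cs by (rule mult_left_mono)
    finally have eb: "sq (m0+1) e \<le> cs * be * sq (m0+1) d" by simp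
    have uw: "(\<lambda>k. u k - w k) = (\<lambda>k. d k + e k)" by (auto simp: d_def e_def)
    have "sq (m0+1) (\<lambda>k. u k - w k) \<le> 2 * sq (m0+1) d + 2 * sq (m0+1) e" unfolding uw using add_l2[OF dl el] by (rule conjunct2)
    also have "\<dots> \<le> (2 + 2 * cs * be) * sq (m0+1) d" using eb by (simp add: algebra_simps)
    finally have "sqrt (sq (m0+1) (\<lambda>k. u k - w k)) \<le> sqrt ((2 + 2 * cs * be) * sq (m0+1) d)" by (rule real_sqrt_le_mono)
    also have "\<dots> = CC * sqrt (sq (m0+1) d)" unfolding CC_def by (simp add: real_sqrt_mult)
    finally show "l2norm (real_of_int lam + 1) (\<lambda>k. u k - w k) \<le> CC * l2norm (real_of_int lam + 1) (\<lambda>k. u k - trunc n u k)"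
      unfolding l2norm_sq m0_def d_def .
  qed
  have T: "(\<lambda>n. l2norm (real_of_int lam + 1) (\<lambda>k. u k - trunc n u k)) \<longlonglongrightarrow> 0"
    unfolding l2norm_sq using tendsto_real_sqrt[OF tail_l2[OF u]] by simp
  have "\<exists>C. \<exists>n0. \<forall>n\<ge>n0.
            (\<forall>v. (\<forall>k\<ge>n. v k = 0) \<longrightarrow> (\<forall>i<n. BL N b a v i = 0) \<longrightarrow> v = (\<lambda>k. 0))
          \<and> (\<forall>w. (\<forall>k\<ge>n. w k = 0)
                 \<longrightarrow> (\<forall>i<n. BL N b a w i = (if i < N then c i else Schain 0 N f (i - N)))
                 \<longrightarrow> l2norm (real_of_int lam + 1) (\<lambda>k. u k - w k)
                     \<le> C * l2norm (real_of_int lam + 1) (\<lambda>k. u k - trunc n u k))"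
  proof (rule exI[of _ CC], rule exI[of _ n0], intro allI impI)
    fix n :: nat assume n: "n0 \<le> n"
    show "(\<forall>v. (\<forall>k\<ge>n. v k = 0) \<longrightarrow> (\<forall>i<n. BL N b a v i = 0) \<longrightarrow> v = (\<lambda>k. 0))
          \<and> (\<forall>w. (\<forall>k\<ge>n. w k = 0)
                 \<longrightarrow> (\<forall>i<n. BL N b a w i = (if i < N then c i else Schain 0 N f (i - N)))
                 \<longrightarrow> l2norm (real_of_int lam + 1) (\<lambda>k. u k - w k)
                     \<le> CC * l2norm (real_of_int lam + 1) (\<lambda>k. u k - trunc n u k))"
      using P1[OF n] P2[OF n] by (rule conjI)
  qed
  thus ?thesis using T by blast
qed

end
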